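(* Let $N \geq 1$, and let \[ \mathcal{C}(u_1, \dots, u_{2N}) = \tfrac{1}{\sqrt{2}}\begin{bmatrix} X(u_1, \dots, u_N) \\ Y(u_{N+1}, \dots, u_{2N}) \end{bmatrix} \in \mathbb{R}^{2N+2} \] be a local parameterization of the Clifford torus $\frac{1}{\sqrt{2}}\mathbb{S}^N \times \frac{1}{\sqrt{2}}\mathbb{S}^N \subset \mathbb{S}^{2N+1}$. Here $X$ and $Y$ are $\mathbb{R}^{N+1}$-valued local charts of the unit sphere $\mathbb{S}^N$ in independent variables. Let \[ \mathcal{D} = \tfrac{1}{\sqrt{2}}\begin{bmatrix} X \\ -Y \end{bmatrix} \] be its unit normal in $\mathbb{S}^{2N+1}$. Let $g_{ij} = \frac{\partial\mathcal{C}}{\partial u_i} \cdot \frac{\partial\mathcal{C}}{\partial u_j}$, let $(g^{ij})$ be its inverse matrix, and let $\mathbf{g} = \det(g_{ij})$. Define \[ w_j = \frac{\partial\mathcal{C}}{\partial u_j} \cdot \mathbf{J}\mathcal{C}, \qquad j = 1, \dots, 2N. \] Then the following hold, where all sums run over $1 \leq i, j \leq 2N$. (a) $\mathbf{J}\mathcal{C} = (\mathcal{D} \cdot \mathbf{J}\mathcal{C})\,\mathcal{D} + \sum g^{ij} w_j \frac{\partial\mathcal{C}}{\partial u_i}$, and $-\mathbf{J}\mathcal{D} = (\mathcal{D} \cdot \mathbf{J}\mathcal{C})\,\mathcal{C} + \sum g^{ij} w_j \frac{\partial\mathcal{D}}{\partial u_i}$. (b) $1 - (\mathcal{D} \cdot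 \mathbf{J}\mathcal{C})^2 = \sum g^{ij} w_i w_j$. (c) $\sum \frac{\partial}{\partial u_i}\left(\sqrt{\mathbf{g}}\, g^{ij} w_j\right) = 0$. (d) $\sum g^{ij} w_j \frac{\partial}{\partial u_i}(\mathcal{D} \cdot \mathbf{J}\mathcal{C}) = 0$. (e) $\sum g^{ij} \frac{\partial}{\partial u_i}(\mathcal{D} \cdot \mathbf{J}\mathcal{C}) \frac{\partial\mathcal{C}}{\partial u_j} = -2\left(\mathbf{J}\mathcal{D} + (\mathcal{D} \cdot \mathbf{J}\mathcal{C})\,\mathcal{C}\right)$.
   Context: The symbol $\cdot$ denotes the standard Euclidean dot product. $\mathbf{J}$ is the complex structure on $\mathbb{R}^{2N+2} = \mathbb{C}^{N+1}$, where $(X, Y)$ is identified with $X + iY$. It is given by multiplication by $i$, i.e. $\mathbf{J}\begin{bmatrix} X \\ Y \end{bmatrix} = \begin{bmatrix} -Y \\ X \end{bmatrix}$. The Clifford torus is \[ \left\{ \tfrac{1}{\sqrt{2}}\begin{bmatrix} X \\ Y \end{bmatrix} : \|X\| = \|Y\| = 1 \right\} \subset \mathbb{S}^{2N+1} \subset \mathbb{R}^{2N+2}. \] *)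

theory Defs
  imports "HOL-Analysis.Analysis"
begin

text \<open>Coordinates: a vector of R^(2N+2) is indexed by 'm + 'm (Inl = X-block, Inr = Y-block),
  with CARD('m) = N+1; the parameter u of R^(2N) is indexed by 'n + 'n, CARD('n) = N,
  Inl k = u_k (variables of X), Inr k = u_(N+k) (variables of Y).\<close>

definition vjoin :: "real^'a::finite \<Rightarrow> real^'a \<Rightarrow> real^('a + 'a)" where
  "vjoin a b = (\<chi> k. case k of Inl i \<Rightarrow> a $ i | Inr i \<Rightarrow> b $ i)"

definition vleft :: "real^('a::finite + 'a) \<Rightarrow> real^'a" where
  "vleft u = (\<chi> k. u $ Inl k)"

definition vright :: "real^('a::finite + 'a) \<Rightarrow> real^'a" where
  "vright u = (\<chi> k. u $ Inr k)"

text \<open>Complex structure J: (X,Y) identified with X + iY, J(X,Y) = (-Y,X).\<close>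
definition Jmap :: "real^('a::finite + 'a) \<Rightarrow> real^('a + 'a)" where
  "Jmap v = (\<chi> k. case k of Inl i \<Rightarrow> - v $ Inr i | Inr i \<Rightarrow> v $ Inl i)"

definition partial :: "(real^'p \<Rightarrow> 'b::real_normed_vector) \<Rightarrow> 'p \<Rightarrow> real^'p \<Rightarrow> 'b" where
  "partial F i u = vector_derivative (\<lambda>t. F (u + t *\<^sub>R axis i 1)) (at 0)"

primrec ipartial :: "'p list \<Rightarrow> (real^'p \<Rightarrow> 'b::real_normed_vector) \<Rightarrow> real^'p \<Rightarrow> 'b" where
  "ipartial [] f = f"
| "ipartial (i # is) f = partial (ipartial is f) i"

definition smooth_on :: "(real^'p) set \<Rightarrow> (real^'p \<Rightarrow> 'b::real_normed_vector) \<Rightarrow> bool" where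
  "smooth_on U f \<longleftrightarrow> (\<forall>is. ipartial is f differentiable_on U)"

definition sphere_chart :: "(real^'n) set \<Rightarrow> (real^'n \<Rightarrow> real^'m) \<Rightarrow> bool" where
  "sphere_chart U X \<longleftrightarrow> open U \<and> smooth_on U X \<and> inj_on X U \<and> X ` U \<subseteq> sphere 0 1 \<and>
     (\<forall>u\<in>U. \<exists>X'. (X has_derivative X') (at u) \<and> inj X')"

definition cliffC :: "(real^'n \<Rightarrow> real^'m) \<Rightarrow> (real^'n \<Rightarrow> real^'m) \<Rightarrow> real^('n + 'n) \<Rightarrow> real^('m + 'm)" where
  "cliffC X Y u = (1 / sqrt 2) *\<^sub>R vjoin (X (vleft u)) (Y (vright u))"

definition cliffD :: "(real^'n \<Rightarrow> real^'m) \<Rightarrow> (real^'n \<Rightarrow> real^'m) \<Rightarrow> real^('n + 'n) \<Rightarrow> real^('m + 'm)" where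
  "cliffD X Y u = (1 / sqrt 2) *\<^sub>R vjoin (X (vleft u)) (- Y (vright u))"

definition metric :: "(real^('n::finite + 'n) \<Rightarrow> real^('m::finite + 'm)) \<Rightarrow> real^('n + 'n) \<Rightarrow> real^('n + 'n)^('n + 'n)" where
  "metric C u = (\<chi> i j. partial C i u \<bullet> partial C j u)"

definition wvec :: "(real^('n::finite + 'n) \<Rightarrow> real^('m::finite + 'm)) \<Rightarrow> real^('n + 'n) \<Rightarrow> ('n + 'n) \<Rightarrow> real" where
  "wvec C u j = partial C j u \<bullet> Jmap (C u)"

end

theory Submission
  imports Defs
begin

lemma partial_from_deriv:
  assumes "(F has_derivative F') (at v)"
  shows "partial F i v = F' (axis i 1)"
proof -
  have lin: "linear F'" using assms has_derivative_linear by blast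
  have "((\<lambda>t. v + t *\<^sub>R axis i 1) has_derivative (\<lambda>t. t *\<^sub>R axis i 1)) (at 0)"
    by (auto intro!: derivative_eq_intros)
  then have "((\<lambda>t. F (v + t *\<^sub>R axis i 1)) has_derivative (\<lambda>t. F' (t *\<^sub>R axis i 1))) (at 0)"
    using has_derivative_compose[of "\<lambda>t. v + t *\<^sub>R axis i 1" _ 0 UNIV F F'] assms by simp
  then have "((\<lambda>t. F (v + t *\<^sub>R axis i 1)) has_vector_derivative F' (axis i 1)) (at 0)"
    unfolding has_vector_derivative_def using linear_cmul[OF lin] by simp
  then show ?thesis unfolding partial_def by (rule vector_derivative_at)
qed


definition flipv :: "real^('a::finite + 'a) \<Rightarrow> real^('a + 'a)" where
  "flipv v = (\<chi> k. case k of Inl i \<Rightarrow> v $ Inl i | Inr i \<Rightarrow> - v $ Inr i)"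

lemma sum_UNIV_plus: "(\<Sum>k\<in>(UNIV::('a::finite + 'b::finite) set). f k) = (\<Sum>i\<in>UNIV. f (Inl i)) + (\<Sum>i\<in>UNIV. f (Inr i))"
  by (simp add: UNIV_Plus_UNIV[symmetric] sum.Plus del: UNIV_Plus_UNIV)

lemma vjoin_nth[simp]: "vjoin a b $ Inl i = a $ i" "vjoin a b $ Inr i = b $ i"
  by (simp_all add: vjoin_def)

lemma vleft_nth[simp]: "vleft u $ i = u $ Inl i" and vright_nth[simp]: "vright u $ i = u $ Inr i"
  by (simp_all add: vleft_def vright_def)

lemma Jmap_nth[simp]: "Jmap v $ Inl i = - v $ Inr i" "Jmap v $ Inr i = v $ Inl i"
  by (simp_all add: Jmap_def)

lemma flipv_nth[simp]: "flipv v $ Inl i = v $ Inl i" "flipv v $ Inr i = - v $ Inr i"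
  by (simp_all add: flipv_def)

lemma inner_plus: "(x::real^('a::finite+'a)) \<bullet> y = (\<Sum>i\<in>UNIV. x $ Inl i * y $ Inl i) + (\<Sum>i\<in>UNIV. x $ Inr i * y $ Inr i)"
  by (simp add: inner_vec_def sum_UNIV_plus)

lemma inner_vec_real: "(x::real^'a) \<bullet> y = (\<Sum>i\<in>UNIV. x $ i * y $ i)"
  by (simp add: inner_vec_def)

lemma vjoin_inner: "vjoin a b \<bullet> vjoin c d = a \<bullet> c + b \<bullet> d"
  by (simp add: inner_plus inner_vec_real)

lemma vec_eq_plus: "(x::'c^('a::finite+'b::finite)) = y \<longleftrightarrow> (\<forall>i. x $ Inl i = y $ Inl i) \<and> (\<forall>i. x $ Inr i = y $ Inr i)"
  by (metis obj_sumE vec_eq_iff)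

lemma vjoin_add: "vjoin a b + vjoin c d = vjoin (a + c) (b + d)"
  by (simp add: vec_eq_plus)
lemma vjoin_scale: "r *\<^sub>R vjoin a b = vjoin (r *\<^sub>R a) (r *\<^sub>R b)"
  by (simp add: vec_eq_plus)
lemma vjoin_zero: "vjoin 0 0 = 0"
  by (simp add: vec_eq_plus)
lemma vjoin_eq0: "vjoin a b = 0 \<longleftrightarrow> a = 0 \<and> b = 0"
  by (auto simp add: vec_eq_plus vec_eq_iff)
lemma vjoin_sum: "finite S \<Longrightarrow> (\<Sum>k\<in>S. vjoin (f k) (g k)) = vjoin (\<Sum>k\<in>S. f k) (\<Sum>k\<in>S. g k)"
  by (induct S rule: finite_induct) (auto simp: vjoin_zero vjoin_add)

lemma Jmap_vjoin: "Jmap (vjoin a b) = vjoin (- b) a"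
  by (simp add: vec_eq_plus)
lemma flipv_vjoin: "flipv (vjoin a b) = vjoin a (- b)"
  by (simp add: vec_eq_plus)

lemma linear_Jmap: "linear (Jmap :: real^('a::finite+'a) \<Rightarrow> _)"
  by (rule linearI) (simp_all add: vec_eq_plus)
lemma linear_flipv: "linear (flipv :: real^('a::finite+'a) \<Rightarrow> _)"
  by (rule linearI) (simp_all add: vec_eq_plus)
lemma linear_vleft: "linear (vleft :: real^('a::finite+'a) \<Rightarrow> _)"
  by (rule linearI) (simp_all add: vec_eq_iff)
lemma linear_vright: "linear (vright :: real^('a::finite+'a) \<Rightarrow> _)"
  by (rule linearI) (simp_all add: vec_eq_iff)
lemma linear_vjoin: "linear (\<lambda>p::(real^'a::finite) \<times> (real^'a). vjoin (fst p) (snd p))"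
  by (rule linearI) (simp_all add: vec_eq_plus)

lemma bl_Jmap: "bounded_linear (Jmap :: real^('a::finite+'a) \<Rightarrow> _)"
  using linear_Jmap linear_conv_bounded_linear by blast
lemma bl_flipv: "bounded_linear (flipv :: real^('a::finite+'a) \<Rightarrow> _)"
  using linear_flipv linear_conv_bounded_linear by blast
lemma bl_vleft: "bounded_linear (vleft :: real^('a::finite+'a) \<Rightarrow> _)"
  using linear_vleft linear_conv_bounded_linear by blast
lemma bl_vright: "bounded_linear (vright :: real^('a::finite+'a) \<Rightarrow> _)"
  using linear_vright linear_conv_bounded_linear by blast
lemma bl_vjoin: "bounded_linear (\<lambda>p::(real^'a::finite) \<times> (real^'a). vjoin (fst p) (snd p))"
  using linear_vjoin linear_conv_bounded_linear by blast

lemma Jmap_inner_Jmap: "Jmap a \<bullet> Jmap b = a \<bullet> b"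
  by (simp add: inner_plus add.commute)
lemma inner_Jmap_swap: "a \<bullet> Jmap b = - (Jmap a \<bullet> b)"
proof -
  have "a \<bullet> Jmap b = (\<Sum>i\<in>UNIV. - (a $ Inl i * b $ Inr i)) + (\<Sum>i\<in>UNIV. a $ Inr i * b $ Inl i)"
    by (simp add: inner_plus)
  moreover have "Jmap a \<bullet> b = (\<Sum>i\<in>UNIV. - (a $ Inr i * b $ Inl i)) + (\<Sum>i\<in>UNIV. a $ Inl i * b $ Inr i)"
    by (simp add: inner_plus)
  ultimately show ?thesis by (simp add: sum_negf)
qed
lemma inner_Jmap_self: "a \<bullet> Jmap a = 0"
  using inner_Jmap_swap[of a a] by (simp add: inner_commute)
lemma Jmap_Jmap: "Jmap (Jmap a) = - a"
  by (simp add: vec_eq_plus)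
lemma flipv_Jmap: "flipv (Jmap a) = - Jmap (flipv a)"
  by (simp add: vec_eq_plus)
lemma flipv_inner: "flipv a \<bullet> b = a \<bullet> flipv b"
  by (simp add: inner_plus)
lemma flipv_flipv: "flipv (flipv a) = a"
  by (simp add: vec_eq_plus)

lemma vjoin_has_derivative:
  assumes "(f has_derivative f') (at x within s)" "(g has_derivative g') (at x within s)"
  shows "((\<lambda>x. vjoin (f x) (g x)) has_derivative (\<lambda>h. vjoin (f' h) (g' h))) (at x within s)"
  using bounded_linear.has_derivative[OF bl_vjoin has_derivative_Pair[OF assms]] by simp


definition matr :: "('c::finite \<Rightarrow> 'r::finite) \<Rightarrow> ('c \<Rightarrow> real^'r) \<Rightarrow> real^'c^'c" where
  "matr \<beta> F = (\<chi> r c. F c $ \<beta> r)"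

lemma matr_nth[simp]: "matr \<beta> F $ r $ c = F c $ \<beta> r"
  by (simp add: matr_def)

lemma matr_cramer:
  "det (matr \<beta> (F(k := (\<Sum>c\<in>UNIV. x c *\<^sub>R F c)))) = x k * det (matr \<beta> F)"
proof -
  have "matr \<beta> (F(k := (\<Sum>c\<in>UNIV. x c *\<^sub>R F c))) =
     (\<chi> i j. if j = k then (matr \<beta> F *v (\<chi> c. x c))$i else (matr \<beta> F)$i$j)"
    by (simp add: vec_eq_iff matrix_vector_mult_def sum_component mult.commute)
  then show ?thesis using cramer_lemma[of k "matr \<beta> F" "\<chi> c. x c"] by simp
qed

lemma matr_swap:
  assumes "a \<noteq> b"
  shows "det (matr \<beta> (F \<circ> Transposition.transpose a b)) = - det (matr \<beta> F)"
proof -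
  have "matr \<beta> (F \<circ> Transposition.transpose a b) = (\<chi> i j. matr \<beta> F $ i $ Transposition.transpose a b j)"
    by (simp add: vec_eq_iff)
  then show ?thesis using det_permute_columns[OF permutes_swap_id[of a UNIV b], of "matr \<beta> F"]
      assms by (simp add: sign_swap_id)
qed

lemma matr_repeat:
  assumes "j \<noteq> k"
  shows "det (matr \<beta> (F(k := F j))) = 0"
proof -
  have "(\<Sum>c\<in>UNIV. (if c = j then 1 else 0) *\<^sub>R F c) = (\<Sum>c\<in>UNIV. if c = j then F c else 0)"
    by (rule sum.cong) auto
  also have "\<dots> = F j" by simp
  finally show ?thesis using matr_cramer[of \<beta> F k "\<lambda>c. if c = j then 1 else 0"] assms
    by simp
qed

lemma matr_scale:
  "det (matr \<beta> (F(k := a *\<^sub>R y))) = a * det (matr \<beta> (F(k := y)))"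
proof -
  have "(\<Sum>c\<in>UNIV. (if c = k then a else 0) *\<^sub>R (F(k := y)) c) = (\<Sum>c\<in>UNIV. if c = k then a *\<^sub>R y else 0)"
    by (rule sum.cong) auto
  also have "\<dots> = a *\<^sub>R y" by simp
  finally have "(\<Sum>c\<in>UNIV. (if c = k then a else 0) *\<^sub>R (F(k := y)) c) = a *\<^sub>R y" .
  then show ?thesis using matr_cramer[of \<beta> "F(k := y)" k "\<lambda>c. if c = k then a else 0"]
    by simp
qed

definition liftp :: "('a \<Rightarrow> 'a) \<Rightarrow> ('a + 'b \<Rightarrow> 'a + 'b)" where
  "liftp q = map_permutation UNIV Inl q"

lemma liftp_Inl[simp]: "liftp q (Inl i) = Inl (q i)"
  by (simp add: liftp_def map_permutation_def restrict_id_def)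
lemma liftp_Inr[simp]: "liftp q (Inr i) = Inr i"
  by (auto simp add: liftp_def map_permutation_def restrict_id_def)

lemma liftp_permutes: "q permutes (UNIV::'a set) \<Longrightarrow> liftp q permutes (UNIV :: ('a + 'b) set)"
  unfolding liftp_def
  by (rule permutes_subset[OF map_permutation_permutes[of Inl UNIV "range Inl"]]) (auto simp: bij_betw_def)

lemma sign_liftp: "q permutes (UNIV::'a::finite set) \<Longrightarrow> sign (liftp q :: 'a + 'b \<Rightarrow> 'a + 'b) = sign q"
  unfolding liftp_def by (rule sign_map_permutation) auto

lemma prod_UNIV_plus: "(\<Prod>k\<in>(UNIV::('a::finite + 'b::finite) set). f k) = (\<Prod>i\<in>UNIV. f (Inl i)) * (\<Prod>i\<in>UNIV. f (Inr i))"
proof -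
  have "(\<Prod>k\<in>(UNIV::('a + 'b) set). f k) = (\<Prod>k\<in>Inl ` UNIV \<union> Inr ` UNIV. f k)"
    by (simp add: UNIV_sum)
  also have "\<dots> = (\<Prod>k\<in>Inl ` UNIV. f k) * (\<Prod>k\<in>Inr ` UNIV. f k)"
    by (rule prod.union_disjoint) auto
  also have "\<dots> = (\<Prod>i\<in>UNIV. f (Inl i)) * (\<Prod>i\<in>UNIV. f (Inr i))"
    by (simp add: prod.reindex)
  finally show ?thesis .
qed

definition blockI :: "real^'a::finite^'a \<Rightarrow> real^('a + 'b::finite)^('a + 'b)" where
  "blockI A = (\<chi> c c'. case c of Inl i \<Rightarrow> (case c' of Inl j \<Rightarrow> A$i$j | Inr _ \<Rightarrow> 0)
      | Inr a \<Rightarrow> (case c' of Inl _ \<Rightarrow> 0 | Inr b \<Rightarrow> if a = b then 1 else 0))"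

lemma det_blockI: "det (blockI A :: real^('a::finite + 'b::finite)^('a + 'b)) = det (A::real^'a^'a)"
proof -
  let ?K = "blockI A :: real^('a + 'b)^('a + 'b)"
  let ?S = "{p. p permutes (UNIV :: ('a + 'b) set)}"
  let ?Q = "{q. q permutes (UNIV :: 'a set)}"
  let ?L = "liftp :: ('a \<Rightarrow> 'a) \<Rightarrow> 'a + 'b \<Rightarrow> 'a + 'b"
  let ?f = "\<lambda>p. of_int (sign p) * (\<Prod>i\<in>UNIV. ?K $ i $ p i)"
  have sub: "?L ` ?Q \<subseteq> ?S"
  proof
    fix p assume "p \<in> ?L ` ?Q"
    then obtain q where "q permutes (UNIV :: 'a set)" "p = ?L q" by auto
    then show "p \<in> ?S" using liftp_permutes[of q] by simp
  qed
  have zero: "?f p = 0" if p: "p \<in> ?S - ?L ` ?Q" for p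
  proof (rule ccontr)
    assume "?f p \<noteq> 0"
    then have nz: "?K $ c $ p c \<noteq> 0" for c
      using prod_zero_iff[of UNIV "\<lambda>i. ?K $ i $ p i"] by auto
    have pr: "p (Inr a) = Inr a" for a
    proof (cases "p (Inr a)")
      case (Inl j) then show ?thesis using nz[of "Inr a"] by (simp add: blockI_def)
    next
      case (Inr b) then show ?thesis using nz[of "Inr a"] by (simp add: blockI_def split: if_splits)
    qed
    have pl: "\<exists>j. p (Inl i) = Inl j" for i
    proof (cases "p (Inl i)")
      case (Inl j) then show ?thesis by simp
    next
      case (Inr b) then show ?thesis using nz[of "Inl i"] by (simp add: blockI_def)
    qed
    define q where "q i = (case p (Inl i) of Inl j \<Rightarrow> j | Inr _ \<Rightarrow> i)" for i
    have pq: "p (Inl i) = Inl (q i)" for i 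
    proof -
      obtain j where "p (Inl i) = Inl j" using pl by blast
      then show ?thesis by (simp add: q_def)
    qed
    have "p = ?L q"
    proof
      fix x show "p x = liftp q x" by (cases x) (simp_all only: pq pr liftp_Inl liftp_Inr)
    qed
    moreover have "q permutes UNIV"
    proof -
      have "inj p" using p permutes_inj by blast
      then have "inj q" unfolding inj_def using pq by (metis sum.inject(1))
      then have "bij q" by (simp add: bij_def finite_UNIV_inj_surj)
      then show ?thesis unfolding bij_def by (intro bij_imp_permutes) (auto simp: bij_betw_def)
    qed
    ultimately show False using p by blast
  qed
  have "det ?K = sum ?f ?S" by (simp add: det_def)
  also have "\<dots> = sum ?f (?L ` ?Q)"
    by (rule sum.mono_neutral_right) (simp add: finite_permutations, rule sub, use zero in blast)
  also have "\<dots> = sum (?f \<circ> ?L) ?Q"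
  proof (rule sum.reindex)
    show "inj_on ?L ?Q"
    proof (rule inj_onI)
      fix q1 q2 :: "'a \<Rightarrow> 'a" assume "liftp q1 = (liftp q2 :: 'a + 'b \<Rightarrow> _)"
      then have "liftp q1 (Inl i) = (liftp q2 (Inl i) :: 'a + 'b)" for i by simp
      then show "q1 = q2" by (auto simp: fun_eq_iff)
    qed
  qed
  also have "\<dots> = sum (\<lambda>q. of_int (sign q) * (\<Prod>i\<in>UNIV. A $ i $ q i)) ?Q"
  proof (rule sum.cong)
    fix q assume q: "q \<in> ?Q"
    have "(\<Prod>i\<in>UNIV. ?K $ i $ ?L q i) = (\<Prod>i\<in>UNIV. ?K $ Inl i $ ?L q (Inl i)) * (\<Prod>i\<in>UNIV. ?K $ Inr i $ ?L q (Inr i))"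
      by (rule prod_UNIV_plus)
    also have "\<dots> = (\<Prod>i\<in>UNIV. A $ i $ q i)" by (simp add: blockI_def)
    finally show "(?f \<circ> ?L) q = of_int (sign q) * (\<Prod>i\<in>UNIV. A $ i $ q i)"
      using sign_liftp[of q, where 'b='b] q by simp
  qed simp
  also have "\<dots> = det A" by (simp add: det_def)
  finally show ?thesis .
qed


lemma det_has_derivative:
  fixes A :: "'x::real_normed_vector \<Rightarrow> real^'n^'n"
  assumes "\<And>i j. ((\<lambda>x. A x $ i $ j) has_derivative A' i j) (at u)"
  shows "((\<lambda>x. det (A x)) has_derivative
     (\<lambda>h. \<Sum>p\<in>{p. p permutes (UNIV::'n set)}. of_int (sign p) *
        (\<Sum>i\<in>UNIV. A' i (p i) h * (\<Prod>j\<in>UNIV - {i}. A u $ j $ p j)))) (at u)"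
  unfolding det_def
  by (auto intro!: derivative_eq_intros assms)

lemma sum_perm_reindex:
  assumes "p permutes (UNIV::'c::finite set)"
  shows "(\<Sum>c\<in>UNIV. f c) = (\<Sum>r\<in>UNIV. f (p r))"
proof -
  have "(\<Sum>c\<in>UNIV. f c) = (\<Sum>c\<in>p ` UNIV. f c)" using permutes_surj[OF assms] by simp
  also have "\<dots> = (\<Sum>r\<in>UNIV. f (p r))"
    using permutes_inj[OF assms] by (simp add: sum.reindex)
  finally show ?thesis .
qed

lemma det_matr_has_derivative:
  fixes F :: "'x::real_normed_vector \<Rightarrow> 'c::finite \<Rightarrow> real^'r::finite"
  assumes "\<And>c. ((\<lambda>x. F x c) has_derivative F' c) (at u)"
  shows "((\<lambda>x. det (matr \<beta> (F x))) has_derivative (\<lambda>h. \<Sum>c\<in>UNIV. det (matr \<beta> ((F u)(c := F' c h))))) (at u)"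
proof -
  have ent: "((\<lambda>x. matr \<beta> (F x) $ i $ j) has_derivative (\<lambda>h. F' j h $ \<beta> i)) (at u)" for i j
    using bounded_linear.has_derivative[OF bounded_linear_vec_nth assms[of j], of "\<beta> i"] by simp
  show ?thesis
  proof (rule has_derivative_eq_rhs[OF det_has_derivative[OF ent]], rule ext)
    fix h
    let ?S = "{p. p permutes (UNIV::'c set)}"
    have "(\<Sum>c\<in>UNIV. det (matr \<beta> ((F u)(c := F' c h)))) =
      (\<Sum>c\<in>UNIV. \<Sum>p\<in>?S. of_int (sign p) * (\<Prod>r\<in>UNIV. ((F u)(c := F' c h)) (p r) $ \<beta> r))"
      by (simp add: det_def)
    also have "\<dots> = (\<Sum>p\<in>?S. of_int (sign p) * (\<Sum>c\<in>UNIV. \<Prod>r\<in>UNIV. ((F u)(c := F' c h)) (p r) $ \<beta> r))"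
      by (subst sum.swap) (simp add: sum_distrib_left)
    also have "\<dots> = (\<Sum>p\<in>?S. of_int (sign p) * (\<Sum>i\<in>UNIV. F' (p i) h $ \<beta> i * (\<Prod>j\<in>UNIV - {i}. F u (p j) $ \<beta> j)))"
    proof (rule sum.cong[OF refl])
      fix p assume "p \<in> ?S"
      then have p: "p permutes (UNIV::'c set)" by simp
      have "(\<Sum>c\<in>UNIV. \<Prod>r\<in>UNIV. ((F u)(c := F' c h)) (p r) $ \<beta> r) =
         (\<Sum>i\<in>UNIV. \<Prod>r\<in>UNIV. ((F u)(p i := F' (p i) h)) (p r) $ \<beta> r)"
        by (rule sum_perm_reindex[OF p])
      also have "\<dots> = (\<Sum>i\<in>UNIV. F' (p i) h $ \<beta> i * (\<Prod>j\<in>UNIV - {i}. F u (p j) $ \<beta> j))"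
      proof (rule sum.cong[OF refl])
        fix i
        have "(\<Prod>r\<in>UNIV. ((F u)(p i := F' (p i) h)) (p r) $ \<beta> r) =
           ((F u)(p i := F' (p i) h)) (p i) $ \<beta> i * (\<Prod>r\<in>UNIV - {i}. ((F u)(p i := F' (p i) h)) (p r) $ \<beta> r)"
          by (rule prod.remove) auto
        also have "(\<Prod>r\<in>UNIV - {i}. ((F u)(p i := F' (p i) h)) (p r) $ \<beta> r) = (\<Prod>j\<in>UNIV - {i}. F u (p j) $ \<beta> j)"
        proof (rule prod.cong[OF refl])
          fix j assume "j \<in> UNIV - {i}"
          then have "p j \<noteq> p i" using permutes_inj[OF p] by (auto simp: inj_def)
          then show "((F u)(p i := F' (p i) h)) (p j) $ \<beta> j = F u (p j) $ \<beta> j" by simp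
        qed
        finally show "(\<Prod>r\<in>UNIV. ((F u)(p i := F' (p i) h)) (p r) $ \<beta> r) = F' (p i) h $ \<beta> i * (\<Prod>j\<in>UNIV - {i}. F u (p j) $ \<beta> j)"
          by simp
      qed
      finally show "of_int (sign p) * (\<Sum>c\<in>UNIV. \<Prod>r\<in>UNIV. ((F u)(c := F' c h)) (p r) $ \<beta> r) =
         of_int (sign p) * (\<Sum>i\<in>UNIV. F' (p i) h $ \<beta> i * (\<Prod>j\<in>UNIV - {i}. F u (p j) $ \<beta> j))" by simp
    qed
    finally show "(\<Sum>p\<in>?S. of_int (sign p) * (\<Sum>i\<in>UNIV. F' (p i) h $ \<beta> i * (\<Prod>j\<in>UNIV - {i}. matr \<beta> (F u) $ j $ p j))) =
        (\<Sum>c\<in>UNIV. det (matr \<beta> ((F u)(c := F' c h))))" by simp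
  qed
qed

lemma det_differentiable:
  fixes A :: "'x::real_normed_vector \<Rightarrow> real^'n^'n"
  assumes "\<And>i j. (\<lambda>x. A x $ i $ j) differentiable (at u)"
  shows "(\<lambda>x. det (A x)) differentiable (at u)"
proof -
  obtain A' where "((\<lambda>x. A x $ i $ j) has_derivative A' i j) (at u)" for i j
    using assms unfolding differentiable_def by metis
  then show ?thesis using det_has_derivative unfolding differentiable_def by blast
qed

lemma inv_props:
  assumes "invertible (A::real^'n^'n)"
  shows "A ** matrix_inv A = mat 1" "matrix_inv A ** A = mat 1"
  using someI_ex[OF assms[unfolded invertible_def]] unfolding matrix_inv_def by auto

lemma inv_sym:
  assumes "invertible (A::real^'n^'n)" "transpose A = A"
  shows "transpose (matrix_inv A) = matrix_inv A"
proof -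
  have "A ** transpose (matrix_inv A) = mat 1"
    using arg_cong[OF inv_props(2)[OF assms(1)], of transpose] assms(2)
    by (simp add: matrix_transpose_mul)
  then have "matrix_inv A ** (A ** transpose (matrix_inv A)) = matrix_inv A" by simp
  then show ?thesis by (simp add: matrix_mul_assoc inv_props(2)[OF assms(1)])
qed

lemma inv_solve:
  assumes "invertible (A::real^'n^'n)" "A *v x = y"
  shows "x = matrix_inv A *v y"
proof -
  have "matrix_inv A *v y = (matrix_inv A ** A) *v x" using assms(2) by (metis matrix_vector_mul_assoc)
  then show ?thesis by (simp add: inv_props(2)[OF assms(1)])
qed

lemma inv_entry:
  fixes A :: "real^'n^'n"
  assumes "det A \<noteq> 0"
  shows "matrix_inv A $ i $ j = det (\<chi> r c. if c = i then (if r = j then 1 else 0) else A $ r $ c) / det A"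
proof -
  have inv: "invertible A" using assms invertible_det_nz by blast
  let ?x = "\<chi> k. matrix_inv A $ k $ j"
  have "A *v ?x = (\<chi> r. if r = j then 1 else 0)"
    using inv_props(1)[OF inv]
    by (simp add: vec_eq_iff matrix_vector_mult_def matrix_matrix_mult_def mat_def)
  then have "?x = (\<chi> k. det(\<chi> r c. if c = k then (\<chi> r. if r = j then 1 else 0)$r else A$r$c) / det A)"
    using cramer[OF assms] by blast
  moreover have "(\<chi> r c. if c = i then (\<chi> r. if r = j then 1 else 0)$r else A$r$c) = (\<chi> r c. if c = i then (if r = j then 1 else 0) else A $ r $ c :: real^'n^'n)"
    by (simp add: vec_eq_iff)
  ultimately show ?thesis by (simp add: vec_eq_iff)
qed


lemma line_deriv:
  fixes f :: "'a::real_normed_vector \<Rightarrow> real"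
  assumes "(f has_derivative f') (at (w + s *\<^sub>R a))"
  shows "((\<lambda>s. f (w + s *\<^sub>R a)) has_real_derivative f' a) (at s)"
proof -
  have lin: "linear f'" using assms has_derivative_linear by blast
  have "((\<lambda>s. w + s *\<^sub>R a) has_derivative (\<lambda>h. h *\<^sub>R a)) (at s)"
    by (auto intro!: derivative_eq_intros)
  then have "((\<lambda>s. f (w + s *\<^sub>R a)) has_derivative (\<lambda>h. f' (h *\<^sub>R a))) (at s)"
    using has_derivative_compose[of "\<lambda>s. w + s *\<^sub>R a" _ s UNIV f f'] assms by simp
  then show ?thesis
    by (rule has_derivative_imp_has_field_derivative) (simp add: linear_cmul[OF lin])
qed

lemma clairaut_half:
  fixes f :: "'a::real_normed_vector \<Rightarrow> real"
  assumes t: "t > 0" and na: "norm a = 1" and nb: "norm b = 1"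
    and der: "\<And>v. norm (v - u) \<le> 2 * t \<Longrightarrow> (f has_derivative f' v) (at v)"
    and lin: "linear L"
    and approx: "\<And>z. norm z \<le> 2 * t \<Longrightarrow> \<bar>f' (u + z) a - f' u a - L z\<bar> \<le> e * norm z"
  shows "\<bar>(f (u + t *\<^sub>R a + t *\<^sub>R b) - f (u + t *\<^sub>R a) - f (u + t *\<^sub>R b) + f u) - t\<^sup>2 * L b\<bar> \<le> 3 * e * t\<^sup>2"
proof -
  define \<psi> where "\<psi> s = f ((u + t *\<^sub>R b) + s *\<^sub>R a) - f (u + s *\<^sub>R a)" for s
  define \<psi>' where "\<psi>' s = f' ((u + t *\<^sub>R b) + s *\<^sub>R a) a - f' (u + s *\<^sub>R a) a" for s
  have e0: "e \<ge> 0"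
  proof -
    have "\<bar>f' (u + t *\<^sub>R a) a - f' u a - L (t *\<^sub>R a)\<bar> \<le> e * norm (t *\<^sub>R a)"
      using approx[of "t *\<^sub>R a"] t na by simp
    then have "0 \<le> e * t" using t na by simp
    then show ?thesis using t by (simp add: zero_le_mult_iff)
  qed
  have "\<exists>z. 0 < z \<and> z < t \<and> \<psi> t - \<psi> 0 = (t - 0) * \<psi>' z"
  proof (rule MVT2[OF t])
    fix s :: real assume s: "0 \<le> s" "s \<le> t"
    have n1: "norm ((u + t *\<^sub>R b + s *\<^sub>R a) - u) \<le> 2 * t"
    proof -
      have "norm (t *\<^sub>R b + s *\<^sub>R a) \<le> norm (t *\<^sub>R b) + norm (s *\<^sub>R a)" by (rule norm_triangle_ineq)
      also have "\<dots> = t + s" using s t na nb by simp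
      finally show ?thesis using s by (simp add: algebra_simps)
    qed
    have n2: "norm ((u + s *\<^sub>R a) - u) \<le> 2 * t" using s t na by simp
    show "(\<psi> has_real_derivative \<psi>' s) (at s)"
      unfolding \<psi>_def \<psi>'_def
      by (intro derivative_intros line_deriv der n1 n2)
  qed
  then obtain z where z: "0 < z" "z < t" "\<psi> t - \<psi> 0 = t * \<psi>' z" by auto
  have "\<psi> t - \<psi> 0 = f (u + t *\<^sub>R a + t *\<^sub>R b) - f (u + t *\<^sub>R a) - f (u + t *\<^sub>R b) + f u"
    unfolding \<psi>_def by (simp add: algebra_simps)
  moreover
  have "\<bar>\<psi>' z - t * L b\<bar> \<le> 3 * e * t"
  proof -
    let ?z1 = "t *\<^sub>R b + z *\<^sub>R a" and ?z2 = "z *\<^sub>R a"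
    have nz1: "norm ?z1 \<le> 2 * t"
    proof -
      have "norm ?z1 \<le> norm (t *\<^sub>R b) + norm (z *\<^sub>R a)" by (rule norm_triangle_ineq)
      also have "\<dots> = t + z" using z t na nb by simp
      finally show ?thesis using z by simp
    qed
    have nz2: "norm ?z2 \<le> t" using z na by simp
    have a1: "\<bar>f' (u + ?z1) a - f' u a - L ?z1\<bar> \<le> e * norm ?z1" using approx nz1 by blast
    have a2: "\<bar>f' (u + ?z2) a - f' u a - L ?z2\<bar> \<le> e * norm ?z2" using approx[of ?z2] nz2 t by linarith
    have "L ?z1 - L ?z2 = t * L b" using lin by (simp add: linear_add linear_cmul)
    moreover have "\<psi>' z = (f' (u + ?z1) a - f' u a) - (f' (u + ?z2) a - f' u a)"
      unfolding \<psi>'_def by (simp add: algebra_simps)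
    moreover have "e * norm ?z1 \<le> e * (2 * t)" using nz1 e0 by (simp add: mult_left_mono)
    moreover have "e * norm ?z2 \<le> e * t" using nz2 e0 by (simp add: mult_left_mono)
    ultimately show ?thesis using a1 a2 by (simp add: abs_le_iff algebra_simps)
  qed
  then have "\<bar>t * \<psi>' z - t\<^sup>2 * L b\<bar> \<le> 3 * e * t\<^sup>2"
  proof -
    have "\<bar>t * \<psi>' z - t\<^sup>2 * L b\<bar> = t * \<bar>\<psi>' z - t * L b\<bar>"
      using t by (simp add: power2_eq_square abs_mult right_diff_distrib[symmetric] mult.assoc)
    also have "\<dots> \<le> t * (3 * e * t)" using \<open>\<bar>\<psi>' z - t * L b\<bar> \<le> 3 * e * t\<close> t by (simp add: mult_left_mono)
    finally show ?thesis by (simp add: power2_eq_square algebra_simps)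
  qed
  ultimately show ?thesis using z by simp
qed

lemma clairaut_real:
  fixes f :: "real^'p::finite \<Rightarrow> real"
  assumes S: "open S" "u \<in> S" and der: "\<And>v. v \<in> S \<Longrightarrow> (f has_derivative f' v) (at v)"
    and Di: "((\<lambda>v. f' v (axis i 1)) has_derivative Li) (at u)"
    and Dj: "((\<lambda>v. f' v (axis j 1)) has_derivative Lj) (at u)"
  shows "Li (axis j 1) = Lj (axis i 1)"
proof (cases "i = j")
  case True
  then show ?thesis using has_derivative_unique[OF Di] Dj by simp
next
  case False
  show ?thesis
  proof (rule ccontr)
    assume ne: "Li (axis j 1) \<noteq> Lj (axis i 1)"
    define d where "d = \<bar>Li (axis j 1) - Lj (axis i 1)\<bar>"
    have d: "d > 0" using ne by (simp add: d_def)
    define e where "e = d / 7"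
    have e: "e > 0" using d by (simp add: e_def)
    obtain di where di: "di > 0" "\<And>y. norm (y - u) < di \<Longrightarrow> norm (f' y (axis i 1) - f' u (axis i 1) - Li (y - u)) \<le> e * norm (y - u)"
      using Di e unfolding has_derivative_at_alt by blast
    obtain dj where dj: "dj > 0" "\<And>y. norm (y - u) < dj \<Longrightarrow> norm (f' y (axis j 1) - f' u (axis j 1) - Lj (y - u)) \<le> e * norm (y - u)"
      using Dj e unfolding has_derivative_at_alt by blast
    obtain r where r: "r > 0" "ball u r \<subseteq> S" using S openE by blast
    define t where "t = min di (min dj r) / 3"
    have t: "t > 0" using di dj r by (simp add: t_def)
    have t2: "2 * t < di" "2 * t < dj" "2 * t < r" using di dj r by (auto simp: t_def)
    have derb: "(f has_derivative f' v) (at v)" if "norm (v - u) \<le> 2 * t" for v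
    proof -
      have "v \<in> ball u r" using that t2 by (simp add: dist_norm norm_minus_commute)
      then show ?thesis using r der by blast
    qed
    have linI: "linear Li" using Di has_derivative_linear by blast
    have linJ: "linear Lj" using Dj has_derivative_linear by blast
    have appI: "\<bar>f' (u + z) (axis i 1) - f' u (axis i 1) - Li z\<bar> \<le> e * norm z" if "norm z \<le> 2 * t" for z
      using di(2)[of "u + z"] that t2 by simp
    have appJ: "\<bar>f' (u + z) (axis j 1) - f' u (axis j 1) - Lj z\<bar> \<le> e * norm z" if "norm z \<le> 2 * t" for z
      using dj(2)[of "u + z"] that t2 by simp
    have h1: "\<bar>(f (u + t *\<^sub>R axis i 1 + t *\<^sub>R axis j 1) - f (u + t *\<^sub>R axis i 1) - f (u + t *\<^sub>R axis j 1) + f u) - t\<^sup>2 * Li (axis j 1)\<bar> \<le> 3 * e * t\<^sup>2"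
      by (rule clairaut_half[OF t _ _ derb linI appI]) simp_all
    have h2: "\<bar>(f (u + t *\<^sub>R axis j 1 + t *\<^sub>R axis i 1) - f (u + t *\<^sub>R axis j 1) - f (u + t *\<^sub>R axis i 1) + f u) - t\<^sup>2 * Lj (axis i 1)\<bar> \<le> 3 * e * t\<^sup>2"
      by (rule clairaut_half[OF t _ _ derb linJ appJ]) simp_all
    have eqp: "u + t *\<^sub>R axis j 1 + t *\<^sub>R axis i 1 = u + t *\<^sub>R axis i 1 + t *\<^sub>R axis j 1" by (simp add: algebra_simps)
    have "\<bar>t\<^sup>2 * Li (axis j 1) - t\<^sup>2 * Lj (axis i 1)\<bar> \<le> 6 * e * t\<^sup>2" using h1 h2[unfolded eqp] by argo
    moreover have "\<bar>t\<^sup>2 * Li (axis j 1) - t\<^sup>2 * Lj (axis i 1)\<bar> = t\<^sup>2 * d"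
      unfolding d_def right_diff_distrib[symmetric] abs_mult by simp
    ultimately have "t\<^sup>2 * d \<le> t\<^sup>2 * (6 * e)" by (simp add: mult.commute mult.left_commute)
    then have "d \<le> 6 * e" using t by simp
    then show False using d by (simp add: e_def)
  qed
qed

lemma clairaut:
  fixes F :: "real^'p::finite \<Rightarrow> 'b::real_inner"
  assumes S: "open S" "u \<in> S" and dF: "\<And>v. v \<in> S \<Longrightarrow> F differentiable (at v)"
    and dP: "\<And>k. partial F k differentiable (at u)"
  shows "partial (partial F j) i u = partial (partial F i) j u"
proof -
  define F' where "F' v = frechet_derivative F (at v)" for v
  have hF: "(F has_derivative F' v) (at v)" if "v \<in> S" for v
    using dF[OF that] unfolding F'_def frechet_derivative_works .
  have pF: "partial F k v = F' v (axis k 1)" if "v \<in> S" for k v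
    using partial_from_deriv[OF hF[OF that]] .
  obtain G where G: "(partial F k has_derivative G k) (at u)" for k
    using dP unfolding differentiable_def by metis
  have pG: "partial (partial F k) l u = G k (axis l 1)" for k l
    using partial_from_deriv[OF G] .
  have eq: "G i (axis j 1) \<bullet> y = G j (axis i 1) \<bullet> y" for y
  proof -
    define f' where "f' v h = F' v h \<bullet> y" for v h
    have hf: "((\<lambda>v. F v \<bullet> y) has_derivative f' v) (at v)" if "v \<in> S" for v
      unfolding f'_def using bounded_linear.has_derivative[OF bounded_linear_inner_left hF[OF that]] .
    have D: "((\<lambda>v. f' v (axis k 1)) has_derivative (\<lambda>h. G k h \<bullet> y)) (at u)" for k
    proof (rule has_derivative_transform_within_open[OF _ S])
      show "((\<lambda>v. partial F k v \<bullet> y) has_derivative (\<lambda>h. G k h \<bullet> y)) (at u)"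
        using bounded_linear.has_derivative[OF bounded_linear_inner_left G] .
      show "partial F k v \<bullet> y = f' v (axis k 1)" if "v \<in> S" for v
        using pF[OF that] by (simp add: f'_def)
    qed
    show ?thesis using clairaut_real[OF S hf D D] by simp
  qed
  have "(G i (axis j 1) - G j (axis i 1)) \<bullet> (G i (axis j 1) - G j (axis i 1)) = 0"
    using eq[of "G i (axis j 1) - G j (axis i 1)"] by (simp add: inner_diff_left)
  then have "G i (axis j 1) = G j (axis i 1)" by simp
  then show ?thesis using pG by simp
qed


lemma linear_expand:
  assumes "linear (L :: real^'n \<Rightarrow> 'b::real_vector)"
  shows "L h = (\<Sum>k\<in>UNIV. h $ k *\<^sub>R L (axis k 1))"
proof -
  have "L h = L (\<Sum>k\<in>UNIV. h $ k *\<^sub>R axis k 1)"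
    using basis_expansion[of h] by (simp add: scalar_mult_eq_scaleR)
  also have "\<dots> = (\<Sum>k\<in>UNIV. h $ k *\<^sub>R L (axis k 1))"
    by (simp add: linear_sum[OF assms] linear_cmul[OF assms])
  finally show ?thesis .
qed

lemma deriv_zero_if_const:
  assumes "(f has_derivative f') (at v)" "open U" "v \<in> U" "\<And>w. w \<in> U \<Longrightarrow> f w = c"
  shows "f' h = 0"
proof -
  have "((\<lambda>w. c) has_derivative (\<lambda>h. 0)) (at v)" by simp
  then have "(f has_derivative (\<lambda>h. 0)) (at v)"
    by (rule has_derivative_transform_within_open[OF _ assms(2,3)]) (use assms(4) in auto)
  then show ?thesis using has_derivative_unique[OF assms(1)] by metis
qed

locale schart =
  fixes U :: "(real^'n::finite) set" and X :: "real^'n \<Rightarrow> real^'m::finite"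
  assumes chart: "sphere_chart U X"
begin

lemma openU: "open U" using chart by (simp add: sphere_chart_def)

definition DX where "DX v = frechet_derivative X (at v)"

lemma diffX: "v \<in> U \<Longrightarrow> X differentiable (at v)"
proof -
  assume v: "v \<in> U"
  have "\<forall>is. ipartial is X differentiable_on U" using chart by (simp add: sphere_chart_def smooth_on_def)
  then have "ipartial [] X differentiable_on U" by blast
  then show ?thesis using v openU by (simp add: differentiable_on_eq_differentiable_at)
qed

lemma hasX: "v \<in> U \<Longrightarrow> (X has_derivative DX v) (at v)"
  unfolding DX_def using diffX frechet_derivative_works by blast

lemma diffP: "v \<in> U \<Longrightarrow> partial X k differentiable (at v)"
proof -
  assume v: "v \<in> U"
  have "\<forall>is. ipartial is X differentiable_on U" using chart by (simp add: sphere_chart_def smooth_on_def)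
  then have "ipartial [k] X differentiable_on U" by blast
  then show ?thesis using v openU by (simp add: differentiable_on_eq_differentiable_at)
qed

lemma partialX: "v \<in> U \<Longrightarrow> partial X k v = DX v (axis k 1)"
  using partial_from_deriv[OF hasX] .

lemma linDX: "v \<in> U \<Longrightarrow> linear (DX v)"
  using hasX has_derivative_linear by blast

lemma DX_expand: "v \<in> U \<Longrightarrow> DX v h = (\<Sum>k\<in>UNIV. h $ k *\<^sub>R partial X k v)"
  using linear_expand[OF linDX, of v h] partialX[symmetric] by simp

lemma indep: "v \<in> U \<Longrightarrow> (\<Sum>k\<in>UNIV. c $ k *\<^sub>R partial X k v) = 0 \<Longrightarrow> c = 0"
proof -
  assume v: "v \<in> U" and s: "(\<Sum>k\<in>UNIV. c $ k *\<^sub>R partial X k v) = 0"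
  obtain X' where X': "(X has_derivative X') (at v)" "inj X'"
    using chart v by (auto simp: sphere_chart_def)
  have "X' = DX v" using has_derivative_unique[OF X'(1) hasX[OF v]] .
  then have "DX v c = DX v 0" using s DX_expand[OF v] linear_0[OF linDX[OF v]] by simp
  then show "c = 0" using X'(2) \<open>X' = DX v\<close> by (simp add: inj_eq)
qed

lemma unit: "v \<in> U \<Longrightarrow> X v \<bullet> X v = 1"
proof -
  assume "v \<in> U"
  then have "X v \<in> sphere 0 1" using chart by (auto simp: sphere_chart_def)
  then have "norm (X v) = 1" by simp
  then show ?thesis by (simp add: dot_square_norm)
qed

lemma orth: "v \<in> U \<Longrightarrow> X v \<bullet> partial X k v = 0"
proof -
  assume v: "v \<in> U"
  have "((\<lambda>w. X w \<bullet> X w) has_derivative (\<lambda>h. X v \<bullet> DX v h + DX v h \<bullet> X v)) (at v)"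
    using has_derivative_inner[OF hasX[OF v] hasX[OF v]] .
  then have "X v \<bullet> DX v (axis k 1) + DX v (axis k 1) \<bullet> X v = 0"
    by (rule deriv_zero_if_const[OF _ openU v]) (rule unit)
  then show ?thesis using partialX[OF v] by (simp add: inner_commute)
qed

end


locale torus = X: schart UX X + Y: schart UY Y
  for UX :: "(real^'n::finite) set" and X :: "real^'n \<Rightarrow> real^'m::finite"
  and UY :: "(real^'n) set" and Y :: "real^'n \<Rightarrow> real^'m"
begin

definition V where "V = {v. vleft v \<in> UX \<and> vright v \<in> UY}"

abbreviation C where "C \<equiv> cliffC X Y"
abbreviation D where "D \<equiv> cliffD X Y"
abbreviation P where "P i v \<equiv> partial C i v"

definition DC where "DC v h = (1 / sqrt 2) *\<^sub>R vjoin (X.DX (vleft v) (vleft h)) (Y.DX (vright v) (vright h))"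

lemma openV: "open V"
proof -
  have "V = vleft -` UX \<inter> vright -` UY" by (auto simp: V_def)
  moreover have "open (vleft -` UX)"
    by (rule open_vimage[OF X.openU]) (simp add: linear_continuous_on bl_vleft)
  moreover have "open (vright -` UY)"
    by (rule open_vimage[OF Y.openU]) (simp add: linear_continuous_on bl_vright)
  ultimately show ?thesis by auto
qed

lemma hasC: "v \<in> V \<Longrightarrow> (C has_derivative DC v) (at v)"
proof -
  assume v: "v \<in> V"
  have l: "((\<lambda>v. X (vleft v)) has_derivative (\<lambda>h. X.DX (vleft v) (vleft h))) (at v)"
    using has_derivative_compose[OF bounded_linear_imp_has_derivative[OF bl_vleft] X.hasX] v
    by (simp add: V_def)
  have r: "((\<lambda>v. Y (vright v)) has_derivative (\<lambda>h. Y.DX (vright v) (vright h))) (at v)"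
    using has_derivative_compose[OF bounded_linear_imp_has_derivative[OF bl_vright] Y.hasX] v
    by (simp add: V_def)
  show ?thesis
    unfolding cliffC_def DC_def
    by (intro has_derivative_scaleR_right vjoin_has_derivative l r)
qed

lemma vleft_axis[simp]: "vleft (axis (Inl k) 1 :: real^('n+'n)) = axis k 1" "vleft (axis (Inr k) 1 :: real^('n+'n)) = 0"
  by (auto simp: vec_eq_iff axis_def)
lemma vright_axis[simp]: "vright (axis (Inr k) 1 :: real^('n+'n)) = axis k 1" "vright (axis (Inl k) 1 :: real^('n+'n)) = 0"
  by (auto simp: vec_eq_iff axis_def)

lemma PL: "v \<in> V \<Longrightarrow> P (Inl k) v = (1 / sqrt 2) *\<^sub>R vjoin (partial X k (vleft v)) 0"
proof -
  assume v: "v \<in> V"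
  then have "P (Inl k) v = DC v (axis (Inl k) 1)" using partial_from_deriv[OF hasC] by blast
  also have "\<dots> = (1 / sqrt 2) *\<^sub>R vjoin (partial X k (vleft v)) 0"
    using v by (simp add: DC_def V_def X.partialX linear_0[OF Y.linDX])
  finally show ?thesis .
qed

lemma PR: "v \<in> V \<Longrightarrow> P (Inr k) v = (1 / sqrt 2) *\<^sub>R vjoin 0 (partial Y k (vright v))"
proof -
  assume v: "v \<in> V"
  then have "P (Inr k) v = DC v (axis (Inr k) 1)" using partial_from_deriv[OF hasC] by blast
  also have "\<dots> = (1 / sqrt 2) *\<^sub>R vjoin 0 (partial Y k (vright v))"
    using v by (simp add: DC_def V_def Y.partialX linear_0[OF X.linDX])
  finally show ?thesis .
qed

lemma D_flip: "D v = flipv (C v)"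
  by (simp add: cliffD_def cliffC_def vec_eq_plus)

lemma hasD: "v \<in> V \<Longrightarrow> (D has_derivative (\<lambda>h. flipv (DC v h))) (at v)"
  unfolding D_flip using bounded_linear.has_derivative[OF bl_flipv hasC] .

lemma PD: "v \<in> V \<Longrightarrow> partial D i v = flipv (P i v)"
  using partial_from_deriv[OF hasD] partial_from_deriv[OF hasC] by simp

lemma hasJC: "v \<in> V \<Longrightarrow> ((\<lambda>v. Jmap (C v)) has_derivative (\<lambda>h. Jmap (DC v h))) (at v)"
  using bounded_linear.has_derivative[OF bl_Jmap hasC] .

lemma diffPi: "v \<in> V \<Longrightarrow> P i differentiable (at v)"
proof (cases i)
  case (Inl k)
  assume v: "v \<in> V"
  have "((\<lambda>v. partial X k (vleft v)) differentiable (at v))"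
    using differentiable_chain_at[OF bounded_linear_imp_differentiable[OF bl_vleft] X.diffP] v
    by (simp add: V_def o_def)
  then have "(\<lambda>v. (1 / sqrt 2) *\<^sub>R vjoin (partial X k (vleft v)) 0) differentiable (at v)"
    unfolding differentiable_def using vjoin_has_derivative[OF _ has_derivative_const]
    by (metis has_derivative_scaleR_right)
  then obtain f' where "((\<lambda>v. (1 / sqrt 2) *\<^sub>R vjoin (partial X k (vleft v)) 0) has_derivative f') (at v)"
    unfolding differentiable_def by blast
  then have "(P i has_derivative f') (at v)"
    by (rule has_derivative_transform_within_open[OF _ openV v]) (simp add: PL Inl)
  then show ?thesis unfolding differentiable_def by blast
next
  case (Inr k)
  assume v: "v \<in> V"
  have "((\<lambda>v. partial Y k (vright v)) differentiable (at v))"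
    using differentiable_chain_at[OF bounded_linear_imp_differentiable[OF bl_vright] Y.diffP] v
    by (simp add: V_def o_def)
  then have "(\<lambda>v. (1 / sqrt 2) *\<^sub>R vjoin 0 (partial Y k (vright v))) differentiable (at v)"
    unfolding differentiable_def using vjoin_has_derivative[OF has_derivative_const]
    by (metis has_derivative_scaleR_right)
  then obtain f' where "((\<lambda>v. (1 / sqrt 2) *\<^sub>R vjoin 0 (partial Y k (vright v))) has_derivative f') (at v)"
    unfolding differentiable_def by blast
  then have "(P i has_derivative f') (at v)"
    by (rule has_derivative_transform_within_open[OF _ openV v]) (simp add: PR Inr)
  then show ?thesis unfolding differentiable_def by blast
qed

lemma clairautC: "u \<in> V \<Longrightarrow> partial (P j) i u = partial (P i) j u"
proof -
  assume u: "u \<in> V"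
  show ?thesis
  proof (rule clairaut[OF openV u])
    show "C differentiable (at v)" if "v \<in> V" for v using hasC[OF that] by (auto simp: differentiable_def)
    show "P k differentiable (at u)" for k using diffPi[OF u] .
  qed
qed

lemma CC: "v \<in> V \<Longrightarrow> C v \<bullet> C v = 1"
  by (simp add: cliffC_def vjoin_inner X.unit Y.unit V_def)
lemma DD: "v \<in> V \<Longrightarrow> D v \<bullet> D v = 1"
  by (simp add: cliffD_def vjoin_inner X.unit Y.unit V_def)
lemma CD: "v \<in> V \<Longrightarrow> C v \<bullet> D v = 0"
  by (simp add: cliffC_def cliffD_def vjoin_inner X.unit Y.unit V_def)
lemma PC: "v \<in> V \<Longrightarrow> P i v \<bullet> C v = 0"
  by (cases i) (simp_all add: PL PR cliffC_def vjoin_inner X.orth Y.orth V_def inner_commute)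
lemma PDo: "v \<in> V \<Longrightarrow> P i v \<bullet> D v = 0"
  by (cases i) (simp_all add: PL PR cliffD_def vjoin_inner X.orth Y.orth V_def inner_commute)

end


context schart begin
lemma injDX: "v \<in> U \<Longrightarrow> DX v c = 0 \<Longrightarrow> c = 0"
  using indep DX_expand by simp
end

lemma sum_UNIV_bool: "(\<Sum>b\<in>(UNIV::bool set). f b) = f True + f False"
  by (simp add: UNIV_bool add.commute)

locale torus2 = torus UX X UY Y
  for UX :: "(real^'n::finite) set" and X :: "real^'n \<Rightarrow> real^'m::finite"
  and UY :: "(real^'n) set" and Y :: "real^'n \<Rightarrow> real^'m" +
  fixes \<beta> :: "('n + 'n) + bool \<Rightarrow> 'm + 'm"
  assumes bij\<beta>: "bij \<beta>"
begin

definition Fc where "Fc v c = (case c of Inl i \<Rightarrow> P i v | Inr b \<Rightarrow> if b then C v else D v)"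
definition M where "M v = matr \<beta> (Fc v)"
abbreviation g where "g v \<equiv> metric C v"

lemma Fc_simps[simp]: "Fc v (Inl i) = P i v" "Fc v (Inr True) = C v" "Fc v (Inr False) = D v"
  by (simp_all add: Fc_def)

lemma g_nth: "g v $ i $ j = P i v \<bullet> P j v"
  by (simp add: metric_def)

lemma linDC: "v \<in> V \<Longrightarrow> linear (DC v)"
  using hasC has_derivative_linear by blast

lemma P_DC: "v \<in> V \<Longrightarrow> P i v = DC v (axis i 1)"
  using partial_from_deriv[OF hasC] by blast

lemma indepP: "v \<in> V \<Longrightarrow> (\<Sum>i\<in>UNIV. c $ i *\<^sub>R P i v) = 0 \<Longrightarrow> c = 0"
proof -
  assume v: "v \<in> V" and s: "(\<Sum>i\<in>UNIV. c $ i *\<^sub>R P i v) = 0"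
  have "DC v c = (\<Sum>i\<in>UNIV. c $ i *\<^sub>R P i v)"
    using linear_expand[OF linDC[OF v], of c] P_DC[OF v] by simp
  then have "DC v c = 0" using s by simp
  then have "X.DX (vleft v) (vleft c) = 0" "Y.DX (vright v) (vright c) = 0"
    by (simp_all add: DC_def vjoin_eq0)
  then have "vleft c = 0" "vright c = 0"
    using v X.injDX Y.injDX by (auto simp: V_def)
  then show "c = 0" by (simp add: vec_eq_plus vec_eq_iff)
qed

lemma sum_Fc: "(\<Sum>c\<in>UNIV. x c *\<^sub>R Fc v c) = (\<Sum>i\<in>UNIV. x (Inl i) *\<^sub>R P i v) + x (Inr True) *\<^sub>R C v + x (Inr False) *\<^sub>R D v"
  by (subst sum_UNIV_plus) (simp add: sum_UNIV_bool algebra_simps)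

lemma DCo: "v \<in> V \<Longrightarrow> D v \<bullet> C v = 0" using CD by (simp add: inner_commute)
lemma CP: "v \<in> V \<Longrightarrow> C v \<bullet> P i v = 0" using PC by (simp add: inner_commute)
lemma DP: "v \<in> V \<Longrightarrow> D v \<bullet> P i v = 0" using PDo by (simp add: inner_commute)

lemma combo_coef:
  assumes v: "v \<in> V" and y: "y = (\<Sum>c\<in>UNIV. x c *\<^sub>R Fc v c)"
  shows "C v \<bullet> y = x (Inr True)" "D v \<bullet> y = x (Inr False)"
    "P j v \<bullet> y = (\<Sum>i\<in>UNIV. g v $ j $ i * x (Inl i))"
proof -
  have yy: "y = (\<Sum>i\<in>UNIV. x (Inl i) *\<^sub>R P i v) + x (Inr True) *\<^sub>R C v + x (Inr False) *\<^sub>R D v"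
    using y sum_Fc by simp
  show "C v \<bullet> y = x (Inr True)"
    unfolding yy using v by (simp add: inner_add_right inner_sum_right CP CC CD)
  show "D v \<bullet> y = x (Inr False)"
    unfolding yy using v by (simp add: inner_add_right inner_sum_right DP DD DCo)
  show "P j v \<bullet> y = (\<Sum>i\<in>UNIV. g v $ j $ i * x (Inl i))"
    unfolding yy using v by (simp add: inner_add_right inner_sum_right PC PDo g_nth mult.commute)
qed

lemma Mv: "M v *v x = (\<chi> r. (\<Sum>c\<in>UNIV. x $ c *\<^sub>R Fc v c) $ \<beta> r)"
  by (simp add: M_def vec_eq_iff matrix_vector_mult_def sum_component mult.commute)

lemma vec_beta_eq: "(\<chi> r. a $ \<beta> r) = (\<chi> r. b $ \<beta> r) \<Longrightarrow> a = b"
proof -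
  assume "(\<chi> r. a $ \<beta> r) = (\<chi> r. b $ \<beta> r)"
  then have "a $ \<beta> r = b $ \<beta> r" for r by (simp add: vec_eq_iff)
  moreover have "surj \<beta>" using bij\<beta> bij_is_surj by blast
  ultimately show "a = b" unfolding vec_eq_iff by (metis surjD)
qed

lemma detM_nz: "v \<in> V \<Longrightarrow> det (M v) \<noteq> 0"
proof -
  assume v: "v \<in> V"
  have "inj ((*v) (M v))"
  proof (rule inj_onI)
    fix a b assume "M v *v a = M v *v b"
    then have "M v *v (a - b) = 0" by (simp add: matrix_vector_mult_diff_distrib)
    then have "(\<chi> r. (\<Sum>c\<in>UNIV. (a - b) $ c *\<^sub>R Fc v c) $ \<beta> r) = (\<chi> r. (0::real^('m+'m)) $ \<beta> r)"
      by (simp add: Mv vec_eq_iff)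
    then have z: "(\<Sum>c\<in>UNIV. (a - b) $ c *\<^sub>R Fc v c) = 0" by (rule vec_beta_eq)
    let ?x = "\<lambda>c. (a - b) $ c"
    have t: "?x (Inr True) = 0" using combo_coef(1)[OF v z[symmetric]] by simp
    have f: "?x (Inr False) = 0" using combo_coef(2)[OF v z[symmetric]] by simp
    have "(\<Sum>i\<in>UNIV. (\<chi> i. ?x (Inl i)) $ i *\<^sub>R P i v) = 0"
      using z t f by (simp add: sum_Fc)
    then have "(\<chi> i. ?x (Inl i)) = 0" by (rule indepP[OF v])
    then have "?x c = 0" for c using t f
    proof (cases c)
      case (Inl i) then show ?thesis using \<open>(\<chi> i. ?x (Inl i)) = 0\<close> by (simp add: vec_eq_iff)
    next
      case (Inr b) then show ?thesis using t f by (cases b) auto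
    qed
    then show "a = b" by (simp add: vec_eq_iff)
  qed
  then show ?thesis
    using det_nz_iff_inj[OF matrix_vector_mul_linear[of "M v"]] by simp
qed

lemma MtM: "v \<in> V \<Longrightarrow> transpose (M v) ** M v = blockI (g v)"
proof -
  assume v: "v \<in> V"
  have e: "(transpose (M v) ** M v) $ c $ c' = Fc v c \<bullet> Fc v c'" for c c'
  proof -
    have "(transpose (M v) ** M v) $ c $ c' = (\<Sum>r\<in>UNIV. Fc v c $ \<beta> r * Fc v c' $ \<beta> r)"
      by (simp add: M_def matrix_matrix_mult_def transpose_def)
    also have "\<dots> = (\<Sum>k\<in>UNIV. Fc v c $ k * Fc v c' $ k)"
      using sum.reindex[of \<beta> UNIV "\<lambda>k. Fc v c $ k * Fc v c' $ k"] bij\<beta>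
      by (simp add: bij_def)
    also have "\<dots> = Fc v c \<bullet> Fc v c'" by (simp add: inner_vec_def)
    finally show ?thesis .
  qed
  show ?thesis
  proof (subst vec_eq_iff, intro allI, subst vec_eq_iff, intro allI)
    fix c c'
    show "(transpose (M v) ** M v) $ c $ c' = blockI (g v) $ c $ c'"
      unfolding e using v
      by (cases c; cases c') (auto simp: blockI_def g_nth Fc_def PC PDo CC DD CD CP DP DCo split: if_splits)
  qed
qed

lemma gdet: "v \<in> V \<Longrightarrow> det (g v) = (det (M v))\<^sup>2"
proof -
  assume v: "v \<in> V"
  have "det (g v) = det (blockI (g v) :: real^(('n+'n)+bool)^(('n+'n)+bool))" by (rule det_blockI[symmetric])
  also have "\<dots> = det (transpose (M v) ** M v)" using MtM[OF v] by simp
  also have "\<dots> = det (M v) * det (M v)" by (simp add: det_mul)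
  finally show ?thesis by (simp add: power2_eq_square)
qed

lemma g_inv: "v \<in> V \<Longrightarrow> invertible (g v)"
  using gdet detM_nz invertible_det_nz by force

lemma g_sym: "transpose (g v) = g v"
  by (simp add: transpose_def metric_def vec_eq_iff inner_commute)

lemma ginv_sym: "v \<in> V \<Longrightarrow> transpose (matrix_inv (g v)) = matrix_inv (g v)"
  using inv_sym[OF g_inv g_sym] .

lemma coefs: "v \<in> V \<Longrightarrow> \<exists>x. y = (\<Sum>c\<in>UNIV. x c *\<^sub>R Fc v c)"
proof -
  assume v: "v \<in> V"
  have inv: "invertible (M v)" using detM_nz[OF v] invertible_det_nz by blast
  let ?x = "matrix_inv (M v) *v (\<chi> r. y $ \<beta> r)"
  have "M v *v ?x = (\<chi> r. y $ \<beta> r)"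
    by (simp add: matrix_vector_mul_assoc inv_props(1)[OF inv])
  then have "(\<chi> r. (\<Sum>c\<in>UNIV. ?x $ c *\<^sub>R Fc v c) $ \<beta> r) = (\<chi> r. y $ \<beta> r)" by (simp add: Mv)
  then have "(\<Sum>c\<in>UNIV. ?x $ c *\<^sub>R Fc v c) = y" by (rule vec_beta_eq)
  then show ?thesis by metis
qed

lemma decomp:
  assumes v: "v \<in> V"
  shows "y = (C v \<bullet> y) *\<^sub>R C v + (D v \<bullet> y) *\<^sub>R D v + (\<Sum>i\<in>UNIV. (matrix_inv (g v) *v (\<chi> j. P j v \<bullet> y)) $ i *\<^sub>R P i v)"
proof -
  obtain x where y: "y = (\<Sum>c\<in>UNIV. x c *\<^sub>R Fc v c)" using coefs[OF v] by blast
  have "g v *v (\<chi> i. x (Inl i)) = (\<chi> j. P j v \<bullet> y)"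
    using combo_coef(3)[OF v y] by (simp add: vec_eq_iff matrix_vector_mult_def)
  then have xi: "(\<chi> i. x (Inl i)) = matrix_inv (g v) *v (\<chi> j. P j v \<bullet> y)"
    by (rule inv_solve[OF g_inv[OF v]])
  have "y = (\<Sum>i\<in>UNIV. x (Inl i) *\<^sub>R P i v) + x (Inr True) *\<^sub>R C v + x (Inr False) *\<^sub>R D v"
    using y sum_Fc by simp
  also have "\<dots> = (C v \<bullet> y) *\<^sub>R C v + (D v \<bullet> y) *\<^sub>R D v + (\<Sum>i\<in>UNIV. (matrix_inv (g v) *v (\<chi> j. P j v \<bullet> y)) $ i *\<^sub>R P i v)"
    using combo_coef(1,2)[OF v y] xi[symmetric] by (simp add: algebra_simps)
  finally show ?thesis .
qed

end


context torus2 begin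

definition hh where "hh v = D v \<bullet> Jmap (C v)"
definition ww where "ww v j = P j v \<bullet> Jmap (C v)"
definition gi where "gi v = matrix_inv (g v)"
definition cc where "cc v = gi v *v (\<chi> j. ww v j)"
definition TT where "TT v = (\<Sum>i\<in>UNIV. cc v $ i *\<^sub>R P i v)"

lemma hasH: "v \<in> V \<Longrightarrow> (hh has_derivative (\<lambda>k. flipv (DC v k) \<bullet> Jmap (C v) + D v \<bullet> Jmap (DC v k))) (at v)"
  unfolding hh_def using has_derivative_inner[OF hasD hasJC] by (simp add: add.commute)

lemma ph: "v \<in> V \<Longrightarrow> partial hh i v = flipv (P i v) \<bullet> Jmap (C v) + D v \<bullet> Jmap (P i v)"
  using partial_from_deriv[OF hasH] P_DC by simp

lemma double_sum_vec:
  "(\<Sum>i\<in>UNIV. \<Sum>j\<in>UNIV. (A $ i $ j * x j) *\<^sub>R Z i) = (\<Sum>i\<in>UNIV. (A *v (\<chi> j. x j)) $ i *\<^sub>R (Z i :: 'b::real_vector))"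
  by (simp add: matrix_vector_mult_def scaleR_sum_left)

lemma TT_eq: "v \<in> V \<Longrightarrow> TT v = Jmap (C v) - hh v *\<^sub>R D v"
proof -
  assume v: "v \<in> V"
  have "Jmap (C v) = (C v \<bullet> Jmap (C v)) *\<^sub>R C v + (D v \<bullet> Jmap (C v)) *\<^sub>R D v +
     (\<Sum>i\<in>UNIV. (matrix_inv (g v) *v (\<chi> j. P j v \<bullet> Jmap (C v))) $ i *\<^sub>R P i v)"
    by (rule decomp[OF v])
  then have eq: "Jmap (C v) = hh v *\<^sub>R D v + TT v"
    by (simp add: TT_def cc_def gi_def ww_def hh_def inner_Jmap_self)
  show ?thesis by (subst eq) simp
qed

lemma decomp0:
  assumes v: "v \<in> V" and "C v \<bullet> y = 0" "D v \<bullet> y = 0"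
  shows "y = (\<Sum>i\<in>UNIV. (gi v *v (\<chi> j. P j v \<bullet> y)) $ i *\<^sub>R P i v)"
  using decomp[OF v, of y] assms(2,3) by (simp add: gi_def)

lemma flip_TT: "v \<in> V \<Longrightarrow> (\<Sum>i\<in>UNIV. cc v $ i *\<^sub>R flipv (P i v)) = - Jmap (D v) - hh v *\<^sub>R C v"
proof -
  assume v: "v \<in> V"
  have lin: "linear (flipv :: real^('m+'m) \<Rightarrow> _)" by (rule linear_flipv)
  have "(\<Sum>i\<in>UNIV. cc v $ i *\<^sub>R flipv (P i v)) = flipv (TT v)"
    by (simp add: TT_def linear_sum[OF lin] linear_cmul[OF lin])
  also have "\<dots> = flipv (Jmap (C v)) - hh v *\<^sub>R flipv (D v)"
    by (simp add: TT_eq[OF v] linear_diff[OF lin] linear_cmul[OF lin])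
  also have "\<dots> = - Jmap (D v) - hh v *\<^sub>R C v"
    by (simp add: flipv_Jmap D_flip flipv_flipv)
  finally show ?thesis .
qed

lemma J_TT: "(\<Sum>i\<in>UNIV. cc v $ i *\<^sub>R Jmap (P i v)) = Jmap (TT v)"
proof -
  have lin: "linear (Jmap :: real^('m+'m) \<Rightarrow> _)" by (rule linear_Jmap)
  show ?thesis by (simp add: TT_def linear_sum[OF lin] linear_cmul[OF lin])
qed

lemma part_a1: "u \<in> V \<Longrightarrow> Jmap (C u) = hh u *\<^sub>R D u + (\<Sum>i\<in>UNIV. \<Sum>j\<in>UNIV. (gi u $ i $ j * ww u j) *\<^sub>R P i u)"
  unfolding double_sum_vec using TT_eq[of u] by (simp add: TT_def cc_def)

lemma part_a2: "u \<in> V \<Longrightarrow> - Jmap (D u) = hh u *\<^sub>R C u + (\<Sum>i\<in>UNIV. \<Sum>j\<in>UNIV. (gi u $ i $ j * ww u j) *\<^sub>R partial D i u)"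
proof -
  assume u: "u \<in> V"
  have "(\<Sum>i\<in>UNIV. \<Sum>j\<in>UNIV. (gi u $ i $ j * ww u j) *\<^sub>R partial D i u) = (\<Sum>i\<in>UNIV. cc u $ i *\<^sub>R flipv (P i u))"
    unfolding double_sum_vec using u by (simp add: PD cc_def)
  then show ?thesis using flip_TT[OF u] by simp
qed

lemma part_b: "u \<in> V \<Longrightarrow> 1 - (hh u)\<^sup>2 = (\<Sum>i\<in>UNIV. \<Sum>j\<in>UNIV. gi u $ i $ j * ww u i * ww u j)"
proof -
  assume u: "u \<in> V"
  have "(\<Sum>i\<in>UNIV. \<Sum>j\<in>UNIV. gi u $ i $ j * ww u i * ww u j) = (\<Sum>i\<in>UNIV. cc u $ i * ww u i)"
    by (simp add: cc_def matrix_vector_mult_def sum_distrib_left sum_distrib_right mult_ac)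
  also have "\<dots> = TT u \<bullet> Jmap (C u)"
    by (simp add: TT_def ww_def inner_sum_left)
  also have "\<dots> = 1 - (hh u)\<^sup>2"
    using u by (simp add: TT_eq inner_diff_left Jmap_inner_Jmap CC hh_def power2_eq_square)
  finally show ?thesis by simp
qed

lemma part_d: "u \<in> V \<Longrightarrow> (\<Sum>i\<in>UNIV. \<Sum>j\<in>UNIV. gi u $ i $ j * ww u j * partial hh i u) = 0"
proof -
  assume u: "u \<in> V"
  have "(\<Sum>i\<in>UNIV. \<Sum>j\<in>UNIV. gi u $ i $ j * ww u j * partial hh i u) = (\<Sum>i\<in>UNIV. cc u $ i * partial hh i u)"
    by (simp add: cc_def matrix_vector_mult_def sum_distrib_right)
  also have "\<dots> = (\<Sum>i\<in>UNIV. cc u $ i *\<^sub>R flipv (P i u)) \<bullet> Jmap (C u) + D u \<bullet> (\<Sum>i\<in>UNIV. cc u $ i *\<^sub>R Jmap (P i u))"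
    using u by (simp add: ph inner_sum_left inner_sum_right distrib_left sum.distrib)
  also have "\<dots> = (- Jmap (D u) - hh u *\<^sub>R C u) \<bullet> Jmap (C u) + D u \<bullet> Jmap (Jmap (C u) - hh u *\<^sub>R D u)"
    using u by (simp add: flip_TT J_TT TT_eq)
  also have "\<dots> = 0"
  proof -
    have 1: "(- Jmap (D u) - hh u *\<^sub>R C u) \<bullet> Jmap (C u) = - (D u \<bullet> C u)"
      by (simp add: inner_diff_left Jmap_inner_Jmap inner_Jmap_self)
    have j: "Jmap (Jmap (C u) - hh u *\<^sub>R D u) = - C u - hh u *\<^sub>R Jmap (D u)"
      by (simp add: linear_diff[OF linear_Jmap] linear_cmul[OF linear_Jmap] Jmap_Jmap)
    have 2: "D u \<bullet> Jmap (Jmap (C u) - hh u *\<^sub>R D u) = - (D u \<bullet> C u)"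
      unfolding j by (simp add: inner_diff_right inner_Jmap_self)
    show ?thesis unfolding 1 2 using DCo[OF u] by simp
  qed
  finally show ?thesis .
qed

lemma part_e: "u \<in> V \<Longrightarrow> (\<Sum>i\<in>UNIV. \<Sum>j\<in>UNIV. (gi u $ i $ j * partial hh i u) *\<^sub>R P j u) = - 2 *\<^sub>R (Jmap (D u) + hh u *\<^sub>R C u)"
proof -
  assume u: "u \<in> V"
  let ?E = "- 2 *\<^sub>R (Jmap (D u) + hh u *\<^sub>R C u)"
  have CJD: "C u \<bullet> Jmap (D u) = - hh u"
  proof -
    have "C u \<bullet> Jmap (D u) = - (Jmap (C u) \<bullet> D u)" by (rule inner_Jmap_swap)
    moreover have "Jmap (C u) \<bullet> D u = hh u" by (simp add: hh_def inner_commute)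
    ultimately show ?thesis by simp
  qed
  have dh: "partial hh j u = P j u \<bullet> ?E" for j
  proof -
    have "partial hh j u = P j u \<bullet> flipv (Jmap (C u)) + D u \<bullet> Jmap (P j u)"
      using u by (simp add: ph flipv_inner)
    also have "\<dots> = - 2 * (P j u \<bullet> Jmap (D u))"
    proof -
      have "D u \<bullet> Jmap (P j u) = - (Jmap (D u) \<bullet> P j u)" by (rule inner_Jmap_swap)
      moreover have "Jmap (D u) \<bullet> P j u = P j u \<bullet> Jmap (D u)" by (rule inner_commute)
      moreover have "flipv (Jmap (C u)) = - Jmap (D u)" by (simp add: flipv_Jmap D_flip)
      ultimately show ?thesis by simp
    qed
    also have "\<dots> = P j u \<bullet> ?E"
      using u by (simp add: inner_add_right PC)
    finally show ?thesis .
  qed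
  have C0: "C u \<bullet> ?E = 0" using u by (simp add: inner_add_right CJD CC)
  have D0: "D u \<bullet> ?E = 0" using u by (simp add: inner_add_right inner_Jmap_self DCo)
  have E0: "?E = (\<Sum>i\<in>UNIV. (gi u *v (\<chi> j. P j u \<bullet> ?E)) $ i *\<^sub>R P i u)"
    by (rule decomp0[OF u C0 D0])
  have vv: "(\<chi> j. P j u \<bullet> ?E) = (\<chi> j. partial hh j u)" by (simp add: dh)
  have E: "?E = (\<Sum>i\<in>UNIV. (gi u *v (\<chi> j. partial hh j u)) $ i *\<^sub>R P i u)"
    using E0 unfolding vv .
  have "(\<Sum>i\<in>UNIV. \<Sum>j\<in>UNIV. (gi u $ i $ j * partial hh i u) *\<^sub>R P j u) =
        (\<Sum>j\<in>UNIV. \<Sum>i\<in>UNIV. (transpose (gi u) $ j $ i * partial hh i u) *\<^sub>R P j u)"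
    by (subst sum.swap) (simp add: transpose_def)
  also have "\<dots> = (\<Sum>j\<in>UNIV. (transpose (gi u) *v (\<chi> i. partial hh i u)) $ j *\<^sub>R P j u)"
    by (rule double_sum_vec)
  also have "\<dots> = ?E" using E ginv_sym[OF u] by (simp add: gi_def)
  finally show ?thesis .
qed

end


lemma matr_swap2:
  assumes "c1 \<noteq> c2"
  shows "det (matr \<beta> (F(c1 := y, c2 := z))) = - det (matr \<beta> (F(c1 := z, c2 := y)))"
proof -
  have "F(c1 := z, c2 := y) = F(c1 := y, c2 := z) \<circ> Transposition.transpose c1 c2"
    using assms by (auto simp: fun_eq_iff Transposition.transpose_def)
  then show ?thesis using matr_swap[OF assms, of \<beta> "F(c1 := y, c2 := z)"] by simp
qed

lemma antisym_sum_zero: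
  fixes b :: "'a::finite \<Rightarrow> 'a \<Rightarrow> real"
  assumes "\<And>i k. b k i = - b i k"
  shows "(\<Sum>i\<in>UNIV. \<Sum>k\<in>UNIV. b i k) = 0"
proof -
  have "(\<Sum>i\<in>UNIV. \<Sum>k\<in>UNIV. b i k) = (\<Sum>k\<in>UNIV. \<Sum>i\<in>UNIV. b i k)" by (rule sum.swap)
  also have "\<dots> = (\<Sum>k\<in>UNIV. \<Sum>i\<in>UNIV. - b k i)"
    by (rule sum.cong[OF refl], rule sum.cong[OF refl]) (rule assms)
  also have "\<dots> = - (\<Sum>i\<in>UNIV. \<Sum>k\<in>UNIV. b i k)" by (simp add: sum_negf)
  finally show ?thesis by simp
qed

context torus2 begin

definition coef where "coef v y c = (case c of Inl k \<Rightarrow> (gi v *v (\<chi> j. P j v \<bullet> y)) $ k | Inr b \<Rightarrow> if b then C v \<bullet> y else D v \<bullet> y)"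

lemma coef_sum: "v \<in> V \<Longrightarrow> (\<Sum>c\<in>UNIV. coef v y c *\<^sub>R Fc v c) = y"
proof -
  assume v: "v \<in> V"
  have "(\<Sum>c\<in>UNIV. coef v y c *\<^sub>R Fc v c) = (C v \<bullet> y) *\<^sub>R C v + (D v \<bullet> y) *\<^sub>R D v + (\<Sum>i\<in>UNIV. (matrix_inv (g v) *v (\<chi> j. P j v \<bullet> y)) $ i *\<^sub>R P i v)"
    by (simp add: sum_Fc coef_def gi_def algebra_simps)
  also have "\<dots> = y" by (rule decomp[OF v, symmetric])
  finally show ?thesis .
qed

lemma cram: "v \<in> V \<Longrightarrow> det (matr \<beta> ((Fc v)(c := y))) = coef v y c * det (M v)"
  using matr_cramer[of \<beta> "Fc v" c "coef v y"] coef_sum[of v y] by (simp add: M_def)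

lemma Fc_triv: "(Fc v)(Inl i := P i v) = Fc v" "(Fc v)(Inr True := C v) = Fc v" "(Fc v)(Inr False := D v) = Fc v"
  by (auto simp: fun_eq_iff Fc_def)

lemma flipP: "v \<in> V \<Longrightarrow> flipv (P (Inl k) v) = P (Inl k) v" "v \<in> V \<Longrightarrow> flipv (P (Inr k) v) = - P (Inr k) v"
  by (simp_all add: PL PR flipv_vjoin vec_eq_plus)

definition sg :: "'n + 'n \<Rightarrow> real" where "sg i = (case i of Inl _ \<Rightarrow> 1 | Inr _ \<Rightarrow> -1)"

lemma flipP_sg: "v \<in> V \<Longrightarrow> flipv (P i v) = sg i *\<^sub>R P i v"
  by (cases i) (simp_all add: flipP sg_def)

lemma sum_sg: "(\<Sum>i\<in>UNIV. sg i) = 0"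
  by (simp add: sum_UNIV_plus sg_def)

definition EE where "EE u i c = (case c of Inl k \<Rightarrow> (if k = i then Jmap (P i u) else partial (P k) i u)
   | Inr b \<Rightarrow> if b then P i u else flipv (P i u))"

lemma deriv_sum_zero:
  assumes u: "u \<in> V"
  shows "(\<Sum>i\<in>UNIV. \<Sum>c\<in>UNIV. det (matr \<beta> ((Fc u)(Inl i := Jmap (C u), c := EE u i c)))) = 0"
proof -
  let ?F = "Fc u" and ?d = "det (M u)" and ?J = "Jmap (C u)"
  let ?t = "\<lambda>i k. det (matr \<beta> (?F(Inl i := ?J, Inl k := EE u i (Inl k))))"
  have split: "(\<Sum>c\<in>UNIV. det (matr \<beta> (?F(Inl i := ?J, c := EE u i c)))) =
     (\<Sum>k\<in>UNIV. ?t i k) + det (matr \<beta> (?F(Inl i := ?J, Inr True := P i u))) + det (matr \<beta> (?F(Inl i := ?J, Inr False := flipv (P i u))))" for i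
    by (subst sum_UNIV_plus) (simp add: sum_UNIV_bool EE_def algebra_simps)
  have tT: "det (matr \<beta> (?F(Inl i := ?J, Inr True := P i u))) = 0" for i
  proof -
    have "det (matr \<beta> (?F(Inl i := ?J, Inr True := P i u))) = - det (matr \<beta> (?F(Inl i := P i u, Inr True := ?J)))"
      by (rule matr_swap2) simp
    also have "\<dots> = - det (matr \<beta> (?F(Inr True := ?J)))" by (simp add: Fc_triv)
    also have "\<dots> = - (coef u ?J (Inr True) * ?d)" using cram[OF u] by simp
    also have "\<dots> = 0" by (simp add: coef_def inner_Jmap_self)
    finally show ?thesis .
  qed
  have tF: "det (matr \<beta> (?F(Inl i := ?J, Inr False := flipv (P i u)))) = - sg i * (coef u ?J (Inr False) * ?d)" for i
  proof -
    have 1: "det (matr \<beta> (?F(Inl i := ?J, Inr False := flipv (P i u)))) = sg i * det (matr \<beta> (?F(Inl i := ?J, Inr False := P i u)))"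
      using matr_scale[of \<beta> "?F(Inl i := ?J)" "Inr False" "sg i" "P i u"] flipP_sg[OF u] by simp
    have "det (matr \<beta> (?F(Inl i := ?J, Inr False := P i u))) = - det (matr \<beta> (?F(Inl i := P i u, Inr False := ?J)))"
      by (rule matr_swap2) simp
    also have "\<dots> = - det (matr \<beta> (?F(Inr False := ?J)))" by (simp add: Fc_triv)
    also have "\<dots> = - (coef u ?J (Inr False) * ?d)" using cram[OF u] by simp
    finally show ?thesis using 1 by simp
  qed
  have tdiag: "?t i i = (gi u *v (\<chi> j. P j u \<bullet> Jmap (P i u))) $ i * ?d" for i
    using cram[OF u, of "Inl i" "Jmap (P i u)"] by (simp add: EE_def coef_def)
  have toff: "?t k i = - ?t i k" if "i \<noteq> k" for i k
  proof -
    have S: "partial (P i) k u = partial (P k) i u" by (rule clairautC[OF u])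
    have "?t i k = det (matr \<beta> (?F(Inl i := ?J, Inl k := partial (P k) i u)))"
      using that by (simp add: EE_def)
    also have "\<dots> = - det (matr \<beta> (?F(Inl i := partial (P k) i u, Inl k := ?J)))"
      by (rule matr_swap2) (use that in simp)
    finally have 1: "?t i k = - det (matr \<beta> (?F(Inl i := partial (P k) i u, Inl k := ?J)))" .
    have 2: "?F(Inl i := partial (P k) i u, Inl k := ?J) = ?F(Inl k := ?J, Inl i := EE u k (Inl i))"
      using that S by (auto simp: fun_eq_iff EE_def)
    have 3: "?t k i = det (matr \<beta> (?F(Inl i := partial (P k) i u, Inl k := ?J)))"
      by (subst 2) (rule refl)
    show ?thesis using 1 3 by linarith
  qed
  let ?b = "\<lambda>i k. if k = i then 0 else ?t i k"
  have sb: "(\<Sum>i\<in>UNIV. \<Sum>k\<in>UNIV. ?b i k) = 0"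
  proof (rule antisym_sum_zero)
    fix i k show "?b k i = - ?b i k"
    proof (cases "i = k")
      case False then show ?thesis using toff[OF False] by simp
    qed simp
  qed
  have sk: "(\<Sum>k\<in>UNIV. ?t i k) = ?t i i + (\<Sum>k\<in>UNIV. ?b i k)" for i
  proof -
    have "(\<Sum>k\<in>UNIV. ?t i k) = (\<Sum>k\<in>UNIV. (if k = i then ?t i i else 0) + ?b i k)"
      by (rule sum.cong) auto
    then show ?thesis by (simp add: sum.distrib)
  qed
  have sd: "(\<Sum>i\<in>UNIV. ?t i i) = 0"
  proof -
    have sym: "gi u $ i $ j = gi u $ j $ i" for i j
    proof -
      have "transpose (gi u) $ j $ i = gi u $ j $ i" using ginv_sym[OF u] by (simp add: gi_def)
      then show ?thesis by (simp add: transpose_def)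
    qed
    let ?O = "\<lambda>j i. P j u \<bullet> Jmap (P i u)"
    have O: "?O j i = - ?O i j" for i j
      using inner_Jmap_swap[of "P j u" "P i u"] by (simp add: inner_commute)
    have "(\<Sum>i\<in>UNIV. (gi u *v (\<chi> j. ?O j i)) $ i) = (\<Sum>i\<in>UNIV. \<Sum>j\<in>UNIV. gi u $ i $ j * ?O j i)"
      by (simp add: matrix_vector_mult_def)
    also have "\<dots> = 0"
    proof (rule antisym_sum_zero)
      fix i k show "gi u $ k $ i * ?O i k = - (gi u $ i $ k * ?O k i)"
        using sym[of k i] O[of k i] by simp
    qed
    finally show ?thesis using tdiag by (simp add: sum_distrib_right[symmetric])
  qed
  have "(\<Sum>i\<in>UNIV. \<Sum>c\<in>UNIV. det (matr \<beta> (?F(Inl i := ?J, c := EE u i c)))) =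
     (\<Sum>i\<in>UNIV. ?t i i) + (\<Sum>i\<in>UNIV. \<Sum>k\<in>UNIV. ?b i k) + 0 - (\<Sum>i\<in>UNIV. sg i) * (coef u ?J (Inr False) * ?d)"
    by (simp add: split sk tT tF sum.distrib sum_subtractf sum_distrib_right sum_negf)
  also have "\<dots> = 0" using sd sb sum_sg by simp
  finally show ?thesis .
qed

end


lemma diff_transform_open:
  assumes "f differentiable (at u)" "open S" "u \<in> S" "\<And>v. v \<in> S \<Longrightarrow> f v = g v"
  shows "g differentiable (at u)"
proof -
  obtain f' where "(f has_derivative f') (at u)" using assms(1) unfolding differentiable_def by blast
  then have "(g has_derivative f') (at u)"
    by (rule has_derivative_transform_within_open[OF _ assms(2,3)]) (rule assms(4))
  then show ?thesis unfolding differentiable_def by blast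
qed

context torus2 begin


lemma hasP: "u \<in> V \<Longrightarrow> (P k has_derivative frechet_derivative (P k) (at u)) (at u)"
  using diffPi frechet_derivative_works by blast

lemma diff_g: "u \<in> V \<Longrightarrow> (\<lambda>v. g v $ a $ b) differentiable (at u)"
proof -
  assume u: "u \<in> V"
  have "(\<lambda>v. P a v \<bullet> P b v) differentiable (at u)"
    using has_derivative_inner[OF hasP[OF u] hasP[OF u]] unfolding differentiable_def by blast
  then show ?thesis by (simp add: g_nth)
qed

lemma gdet_pos: "u \<in> V \<Longrightarrow> det (g u) > 0"
  using gdet detM_nz by simp

lemma diff_sqrtdet: "u \<in> V \<Longrightarrow> (\<lambda>v. sqrt (det (g v))) differentiable (at u)"
proof -
  assume u: "u \<in> V"
  obtain d' where d': "((\<lambda>v. det (g v)) has_derivative d') (at u)"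
    using det_differentiable[of g u] diff_g[OF u] unfolding differentiable_def by blast
  show ?thesis
    using DERIV_compose_FDERIV[OF DERIV_real_sqrt[OF gdet_pos[OF u]] d'] unfolding differentiable_def by blast
qed

lemma diff_gi: "u \<in> V \<Longrightarrow> (\<lambda>v. gi v $ i $ j) differentiable (at u)"
proof -
  assume u: "u \<in> V"
  let ?G = "\<lambda>v. (\<chi> r c. if c = i then (if r = j then 1 else 0) else g v $ r $ c) :: real^('n+'n)^('n+'n)"
  have "(\<lambda>v. det (?G v)) differentiable (at u)"
  proof (rule det_differentiable)
    fix r c show "(\<lambda>v. ?G v $ r $ c) differentiable (at u)"
      using diff_g[OF u, of r c] by (cases "c = i") simp_all
  qed
  moreover have "(\<lambda>v. det (g v)) differentiable (at u)" using det_differentiable[of g u] diff_g[OF u] by blast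
  ultimately have "(\<lambda>v. det (?G v) / det (g v)) differentiable (at u)"
    using gdet_pos[OF u] by simp
  then show ?thesis
  proof (rule diff_transform_open[OF _ openV u])
    fix v assume v: "v \<in> V"
    show "det (?G v) / det (g v) = gi v $ i $ j"
      using inv_entry[of "g v" i j] gdet_pos[OF v] by (simp add: gi_def)
  qed
qed

lemma diff_ww: "u \<in> V \<Longrightarrow> (\<lambda>v. ww v j) differentiable (at u)"
  unfolding ww_def differentiable_def using has_derivative_inner[OF hasP hasJC] by blast

lemma diff_term: "u \<in> V \<Longrightarrow> (\<lambda>v. sqrt (det (g v)) * gi v $ i $ j * ww v j) differentiable (at u)"
  using diff_sqrtdet diff_gi diff_ww by (intro differentiable_mult) auto

end


context torus2 begin

lemma col_der:
  assumes u: "u \<in> V"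
  shows "((\<lambda>v. Fc v c) has_derivative (case c of Inl k \<Rightarrow> frechet_derivative (P k) (at u)
            | Inr b \<Rightarrow> if b then DC u else (\<lambda>h. flipv (DC u h)))) (at u)"
proof (cases c)
  case (Inl k) then show ?thesis using hasP[OF u] by simp
next
  case (Inr b) then show ?thesis using hasC[OF u] hasD[OF u] by (cases b) simp_all
qed

lemma col_der_i:
  assumes u: "u \<in> V"
  shows "((\<lambda>v. ((Fc v)(Inl i := Jmap (C v))) c) has_derivative
     (if c = Inl i then (\<lambda>h. Jmap (DC u h)) else (case c of Inl k \<Rightarrow> frechet_derivative (P k) (at u)
            | Inr b \<Rightarrow> if b then DC u else (\<lambda>h. flipv (DC u h))))) (at u)"
proof (cases "c = Inl i")
  case True then show ?thesis using hasJC[OF u] by simp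
next
  case False then show ?thesis using col_der[OF u, of c] by simp
qed

lemma DF_axis:
  assumes u: "u \<in> V"
  shows "(if c = Inl i then (\<lambda>h. Jmap (DC u h)) else (case c of Inl k \<Rightarrow> frechet_derivative (P k) (at u)
            | Inr b \<Rightarrow> if b then DC u else (\<lambda>h. flipv (DC u h)))) (axis i 1) = EE u i c"
proof (cases c)
  case (Inl k)
  have "partial (P k) i u = frechet_derivative (P k) (at u) (axis i 1)"
    by (rule partial_from_deriv[OF hasP[OF u]])
  then show ?thesis using Inl P_DC[OF u, of i] by (simp add: EE_def)
next
  case (Inr b) then show ?thesis using P_DC[OF u, of i] by (cases b) (simp_all add: EE_def)
qed

lemma part_c:
  assumes u: "u \<in> V"
  shows "(\<Sum>i\<in>UNIV. \<Sum>j\<in>UNIV. partial (\<lambda>v. sqrt (det (g v)) * gi v $ i $ j * ww v j) i u) = 0"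
proof -
  define \<Psi> where "\<Psi> i v = det (matr \<beta> ((Fc v)(Inl i := Jmap (C v))))" for i v
  define DF where "DF i c = (if c = Inl i then (\<lambda>h. Jmap (DC u h)) else (case c of Inl k \<Rightarrow> frechet_derivative (P k) (at u)
            | Inr b \<Rightarrow> if b then DC u else (\<lambda>h. flipv (DC u h))))" for i c
  define \<Psi>' where "\<Psi>' i h = (\<Sum>c\<in>UNIV. det (matr \<beta> (((Fc u)(Inl i := Jmap (C u)))(c := DF i c h))))" for i h
  have hPsi: "(\<Psi> i has_derivative \<Psi>' i) (at u)" for i
    unfolding \<Psi>_def \<Psi>'_def
    by (rule det_matr_has_derivative) (unfold DF_def, rule col_der_i[OF u])
  have Psi_sum: "(\<Sum>i\<in>UNIV. \<Psi>' i (axis i 1)) = 0"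
    using deriv_sum_zero[OF u] DF_axis[OF u] by (simp add: \<Psi>'_def DF_def)
  have hM: "((\<lambda>v. det (M v)) has_derivative
     (\<lambda>h. \<Sum>c\<in>UNIV. det (matr \<beta> ((Fc u)(c := (case c of Inl k \<Rightarrow> frechet_derivative (P k) (at u)
            | Inr b \<Rightarrow> if b then DC u else (\<lambda>h. flipv (DC u h))) h))))) (at u)"
    unfolding M_def by (rule det_matr_has_derivative) (rule col_der[OF u])
  then have cM: "continuous (at u) (\<lambda>v. det (M v))" by (rule has_derivative_continuous)
  define s where "s = sgn (det (M u))"
  have dM0: "det (M u) \<noteq> 0" by (rule detM_nz[OF u])
  have "\<forall>e>0. \<exists>d>0. \<forall>v. dist v u < d \<longrightarrow> dist (det (M v)) (det (M u)) < e"
    using cM unfolding continuous_at_eps_delta .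
  moreover have "\<bar>det (M u)\<bar> > 0" using dM0 by simp
  ultimately obtain d1 where d1: "d1 > 0" "\<And>v. dist v u < d1 \<Longrightarrow> dist (det (M v)) (det (M u)) < \<bar>det (M u)\<bar>"
    by blast
  obtain d2 where d2: "d2 > 0" "ball u d2 \<subseteq> V" using openV u openE by blast
  define \<delta> where "\<delta> = min d1 d2"
  have \<delta>: "\<delta> > 0" using d1 d2 by (simp add: \<delta>_def)
  have near: "v \<in> V \<and> \<bar>det (M v)\<bar> = s * det (M v)" if "dist v u < \<delta>" for v
  proof
    show "v \<in> V" using that d2 by (auto simp: \<delta>_def dist_commute)
    have close: "\<bar>det (M v) - det (M u)\<bar> < \<bar>det (M u)\<bar>" using d1(2)[of v] that by (simp add: \<delta>_def dist_real_def)
    show "\<bar>det (M v)\<bar> = s * det (M v)"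
    proof (cases "det (M u) > 0")
      case True then show ?thesis using close by (simp add: s_def abs_if split: if_splits)
    next
      case False then have "det (M u) < 0" using dM0 by simp
      then show ?thesis using close by (simp add: s_def abs_if split: if_splits)
    qed
  qed
  have PhiPsi: "(\<Sum>j\<in>UNIV. sqrt (det (g v)) * gi v $ i $ j * ww v j) = s * \<Psi> i v" if "dist v u < \<delta>" for i v
  proof -
    have v: "v \<in> V" and a: "\<bar>det (M v)\<bar> = s * det (M v)" using near[OF that] by auto
    have "(\<Sum>j\<in>UNIV. sqrt (det (g v)) * gi v $ i $ j * ww v j) = sqrt (det (g v)) * cc v $ i"
      by (simp add: cc_def matrix_vector_mult_def sum_distrib_left mult.assoc)
    also have "\<dots> = \<bar>det (M v)\<bar> * cc v $ i" by (simp add: gdet[OF v])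
    also have "\<Psi> i v = cc v $ i * det (M v)"
      unfolding \<Psi>_def cram[OF v] by (simp add: coef_def cc_def ww_def)
    ultimately show ?thesis using a by simp
  qed
  have "\<forall>p. \<exists>T. ((\<lambda>v. sqrt (det (g v)) * gi v $ fst p $ snd p * ww v (snd p)) has_derivative T) (at u)"
    using diff_term[OF u] unfolding differentiable_def by blast
  then obtain Tp where Tp: "\<forall>p. ((\<lambda>v. sqrt (det (g v)) * gi v $ fst p $ snd p * ww v (snd p)) has_derivative Tp p) (at u)"
    by (rule choice[THEN exE])
  define T where "T i j = Tp (i, j)" for i j
  have T: "((\<lambda>v. sqrt (det (g v)) * gi v $ i $ j * ww v j) has_derivative T i j) (at u)" for i j
    using Tp[rule_format, of "(i, j)"] by (simp add: T_def)
  have Tsum: "(\<lambda>h. \<Sum>j\<in>UNIV. T i j h) = (\<lambda>h. s * \<Psi>' i h)" for i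
  proof (rule has_derivative_unique)
    show "((\<lambda>v. \<Sum>j\<in>UNIV. sqrt (det (g v)) * gi v $ i $ j * ww v j) has_derivative (\<lambda>h. \<Sum>j\<in>UNIV. T i j h)) (at u)"
      by (rule has_derivative_sum) (rule T)
    have "((\<lambda>v. s * \<Psi> i v) has_derivative (\<lambda>h. s * \<Psi>' i h)) (at u)"
      by (rule has_derivative_mult_right[OF hPsi])
    then show "((\<lambda>v. \<Sum>j\<in>UNIV. sqrt (det (g v)) * gi v $ i $ j * ww v j) has_derivative (\<lambda>h. s * \<Psi>' i h)) (at u)"
      by (rule has_derivative_transform_within[OF _ \<delta>]) (auto simp: PhiPsi)
  qed
  have "(\<Sum>i\<in>UNIV. \<Sum>j\<in>UNIV. partial (\<lambda>v. sqrt (det (g v)) * gi v $ i $ j * ww v j) i u) =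
        (\<Sum>i\<in>UNIV. \<Sum>j\<in>UNIV. T i j (axis i 1))"
    using partial_from_deriv[OF T] by simp
  also have "\<dots> = (\<Sum>i\<in>UNIV. s * \<Psi>' i (axis i 1))"
  proof (rule sum.cong[OF refl])
    fix i show "(\<Sum>j\<in>UNIV. T i j (axis i 1)) = s * \<Psi>' i (axis i 1)"
      using fun_cong[OF Tsum[of i], of "axis i 1"] by simp
  qed
  also have "\<dots> = 0" using Psi_sum by (simp add: sum_distrib_left[symmetric])
  finally show ?thesis .
qed

end


lemma card_sum_fin: "CARD('a::finite + 'b::finite) = CARD('a) + CARD('b)"
proof -
  have "card (UNIV <+> UNIV :: ('a+'b) set) = CARD('a) + CARD('b)" by (rule card_Plus) simp_all
  then show ?thesis by simp
qed

theorem lemma2p3: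
  fixes X Y :: "real^'n \<Rightarrow> real^'m"
    and UX UY :: "(real^'n) set"
    and u :: "real^('n + 'n)"
  assumes dim: "CARD('m) = CARD('n) + 1"
    and chartX: "sphere_chart UX X"
    and chartY: "sphere_chart UY Y"
    and u_in: "vleft u \<in> UX" "vright u \<in> UY"
  defines "C \<equiv> cliffC X Y"
    and "D \<equiv> cliffD X Y"
    and "ginv \<equiv> (\<lambda>v. matrix_inv (metric (cliffC X Y) v))"
    and "gdet \<equiv> (\<lambda>v. det (metric (cliffC X Y) v))"
    and "w \<equiv> wvec (cliffC X Y)"
    and "h \<equiv> (\<lambda>v. cliffD X Y v \<bullet> Jmap (cliffC X Y v))"
  shows "(Jmap (C u) = h u *\<^sub>R D u + (\<Sum>i\<in>UNIV. \<Sum>j\<in>UNIV. (ginv u $ i $ j * w u j) *\<^sub>R partial C i u))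
     \<and> (- Jmap (D u) = h u *\<^sub>R C u + (\<Sum>i\<in>UNIV. \<Sum>j\<in>UNIV. (ginv u $ i $ j * w u j) *\<^sub>R partial D i u))
     \<and> (1 - (h u)\<^sup>2 = (\<Sum>i\<in>UNIV. \<Sum>j\<in>UNIV. ginv u $ i $ j * w u i * w u j))
     \<and> ((\<Sum>i\<in>UNIV. \<Sum>j\<in>UNIV. partial (\<lambda>v. sqrt (gdet v) * ginv v $ i $ j * w v j) i u) = 0)
     \<and> ((\<Sum>i\<in>UNIV. \<Sum>j\<in>UNIV. ginv u $ i $ j * w u j * partial h i u) = 0)
     \<and> ((\<Sum>i\<in>UNIV. \<Sum>j\<in>UNIV. (ginv u $ i $ j * partial h i u) *\<^sub>R partial C j u) = - 2 *\<^sub>R (Jmap (D u) + h u *\<^sub>R C u))"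
proof -
  have "card (UNIV :: (('n + 'n) + bool) set) = card (UNIV :: ('m + 'm) set)"
    using dim by (simp add: card_sum_fin)
  then obtain \<beta> :: "('n + 'n) + bool \<Rightarrow> 'm + 'm" where b: "bij_betw \<beta> UNIV UNIV"
    using finite_same_card_bij[of "UNIV :: (('n + 'n) + bool) set" "UNIV :: ('m + 'm) set"] by auto
  interpret T: torus2 UX X UY Y \<beta>
    by (unfold_locales) (use chartX chartY b in \<open>simp_all add: bij_def\<close>)
  have uV: "u \<in> T.V" using u_in by (simp add: T.V_def)
  have e1: "h = T.hh" by (simp add: h_def T.hh_def fun_eq_iff)
  have e2: "ginv = T.gi" by (simp add: ginv_def T.gi_def fun_eq_iff)
  have e3: "w = T.ww" by (simp add: w_def T.ww_def fun_eq_iff wvec_def)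
  have e4: "gdet = (\<lambda>v. det (T.g v))" by (simp add: gdet_def)
  show ?thesis
    unfolding e1 e2 e3 e4 C_def D_def
  proof (intro conjI)
    show "Jmap (cliffC X Y u) = T.hh u *\<^sub>R cliffD X Y u + (\<Sum>i\<in>UNIV. \<Sum>j\<in>UNIV. (T.gi u $ i $ j * T.ww u j) *\<^sub>R partial (cliffC X Y) i u)"
      by (rule T.part_a1[OF uV])
    show "- Jmap (cliffD X Y u) = T.hh u *\<^sub>R cliffC X Y u + (\<Sum>i\<in>UNIV. \<Sum>j\<in>UNIV. (T.gi u $ i $ j * T.ww u j) *\<^sub>R partial (cliffD X Y) i u)"
      by (rule T.part_a2[OF uV])
    show "1 - (T.hh u)\<^sup>2 = (\<Sum>i\<in>UNIV. \<Sum>j\<in>UNIV. T.gi u $ i $ j * T.ww u i * T.ww u j)"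
      by (rule T.part_b[OF uV])
    show "(\<Sum>i\<in>UNIV. \<Sum>j\<in>UNIV. partial (\<lambda>v. sqrt (det (T.g v)) * T.gi v $ i $ j * T.ww v j) i u) = 0"
      by (rule T.part_c[OF uV])
    show "(\<Sum>i\<in>UNIV. \<Sum>j\<in>UNIV. T.gi u $ i $ j * T.ww u j * partial T.hh i u) = 0"
      by (rule T.part_d[OF uV])
    show "(\<Sum>i\<in>UNIV. \<Sum>j\<in>UNIV. (T.gi u $ i $ j * partial T.hh i u) *\<^sub>R partial (cliffC X Y) j u) = - 2 *\<^sub>R (Jmap (cliffD X Y u) + T.hh u *\<^sub>R cliffC X Y u)"
      by (rule T.part_e[OF uV])
  qed
qed


end
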